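(* Let $T(x)=1+\sum_{n\ge1}t_nx^n$ be the cluster generating function for the consecutive pattern $13425$ (defined in the context). Then \[T(x) = \frac{1+2x-F(x)}{1+x-F(x)},\qquad F(x) = \frac{2}{\sqrt{3x}}\sinh\!\left(\frac13 \operatorname{arcsinh}\!\left(\frac{3\sqrt{3x^3}}{2}\right)\right),\] where $F(x)=x+O(x^4)$ is a power series in $x$. Moreover $T(x)$ is an algebraic function, being a root of a cubic polynomial with coefficients in $\mathbb{Z}[x]$.
   Context: For a consecutive pattern $\sigma$ of length $m$ (here $\sigma=13425$, $m=5$): an occurrence of $\sigma$ in a permutation is a block of $m$ consecutive positions whose entries are in the same relative order as $\sigma$. A $k$-cluster of length $n\ge m$ is a permutation of $\{1,\dots,n\}$ containing precisely $k$ occurrences of $\sigma$, such that every entry belongs to at least one occurrence and any two successive occurrences overlap in at least one position. Let $s_{n,k}$ be the number of $k$-clusters of length $n$, with $s_{1,0}=1$ and $s_{n,k}=0$ otherwise for $n<m$; set $t_n=\sum_k(-1)^ks_{n,k}$ and $T(x)=1+\sum_{n\ge1}t_nx^n$. *)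

theory Defs
  imports "HOL-Analysis.Analysis" "HOL-Analysis.FPS_Convergence"
    "HOL-Computational_Algebra.Polynomial_FPS"
    "HOL-Combinatorics.Multiset_Permutations"
begin

definition sigma :: "nat list" where "sigma = [1,3,4,2,5]"

definition pat_len :: nat where "pat_len = length sigma"

definition occ_at :: "nat list \<Rightarrow> nat \<Rightarrow> bool" where
  "occ_at w i \<longleftrightarrow> i + pat_len \<le> length w \<and>
     (\<forall>a<pat_len. \<forall>b<pat_len. (w ! (i + a) < w ! (i + b) \<longleftrightarrow> sigma ! a < sigma ! b))"

definition occs :: "nat list \<Rightarrow> nat set" where
  "occs w = {i. occ_at w i}"

definition is_cluster :: "nat \<Rightarrow> nat list \<Rightarrow> bool" where
  "is_cluster k w \<longleftrightarrow>
     card (occs w) = k \<and>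
     (\<forall>p<length w. \<exists>i\<in>occs w. i \<le> p \<and> p < i + pat_len) \<and>
     (\<forall>i\<in>occs w. \<forall>j\<in>occs w. i < j \<and> (\<forall>l\<in>occs w. \<not> (i < l \<and> l < j))
         \<longrightarrow> j < i + pat_len)"

definition s_num :: "nat \<Rightarrow> nat \<Rightarrow> nat" where
  "s_num n k = (if n < pat_len then (if n = 1 \<and> k = 0 then 1 else 0)
     else card {w \<in> permutations_of_set {1..n}. is_cluster k w})"

text \<open>t_n = sum_k (-1)^k s_{n,k}; a k-cluster of length n has k \<le> n, so the sum is finite.\<close>
definition t_num :: "nat \<Rightarrow> int" where
  "t_num n = (\<Sum>k\<le>n. (-1) ^ k * int (s_num n k))"

definition cluster_T :: "real fps" where
  "cluster_T = Abs_fps (\<lambda>n. if n = 0 then 1 else real_of_int (t_num n))"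

end

theory Submission
  imports Defs
begin


fun Q :: "nat \<Rightarrow> nat \<Rightarrow> nat" where
  "Q 0 0 = 1"
| "Q 0 (Suc n) = 0"
| "Q (Suc k) 0 = 0"
| "Q (Suc k) (Suc n) = Q (k+3) n + Q k n"

lemma Q0: "Q 0 i = (if i = 0 then 1 else 0)"
  by (cases i) auto

lemma Q_conv: "Q (a+b) n = (\<Sum>i\<le>n. Q a i * Q b (n-i))"
proof (induction n arbitrary: a b)
  case 0
  then show ?case by (cases a) auto
next
  case (Suc n)
  show ?case
  proof (cases a)
    case 0
    have "(\<Sum>i\<le>Suc n. Q a i * Q b (Suc n - i)) = (\<Sum>i\<le>Suc n. if i = 0 then Q b (Suc n) else 0)"
      by (rule sum.cong) (auto simp: Q0 0)
    then show ?thesis using 0 by simp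
  next
    case (Suc a')
    have "Q (a+b) (Suc n) = Q (a'+3+b) n + Q (a'+b) n"
      using Suc by (simp add: ac_simps)
    also have "\<dots> = (\<Sum>i\<le>n. Q (a'+3) i * Q b (n-i)) + (\<Sum>i\<le>n. Q a' i * Q b (n-i))"
      using Suc.IH by presburger
    also have "\<dots> = (\<Sum>i\<le>n. Q a (Suc i) * Q b (Suc n - Suc i))"
      by (simp add: Suc sum.distrib[symmetric] algebra_simps)
    also have "\<dots> = (\<Sum>i\<le>Suc n. Q a i * Q b (Suc n - i))"
      by (subst sum.atMost_Suc_shift) (simp add: Suc del: sum.atMost_Suc)
    finally show ?thesis .
  qed
qed

lemma Q_mod: "Q k n \<noteq> 0 \<Longrightarrow> n mod 3 = k mod 3"
proof (induction k n rule: Q.induct)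
  case (4 k n)
  then have "n mod 3 = k mod 3"
    by (metis Q.simps(4) add.commute add_cancel_right_left mod_add_self2 numeral_3_eq_3)
  then show ?case by (metis mod_Suc_eq)
qed auto

lemma Q_le: "Q k n \<le> 2 ^ n"
proof (induction k n rule: Q.induct)
  case (4 k n)
  then show ?case by simp
qed auto

definition Fk :: "nat \<Rightarrow> real fps" where
  "Fk k = Abs_fps (\<lambda>n. (-1) ^ (n+k) * real (Q k n))"

lemma Fk_add: "Fk (a+b) = Fk a * Fk b"
proof (rule fps_ext)
  fix n
  have "fps_nth (Fk a * Fk b) n = (\<Sum>i=0..n. (-1)^(i+a) * real (Q a i) * ((-1)^(n-i+b) * real (Q b (n-i))))"
    by (simp add: fps_mult_nth Fk_def)
  also have "\<dots> = (\<Sum>i=0..n. (-1)^(n+(a+b)) * (real (Q a i) * real (Q b (n-i))))"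
  proof (rule sum.cong)
    fix i assume "i \<in> {0..n}"
    then have "(i+a) + (n-i+b) = n+(a+b)" by simp
    then have "(-1::real)^(i+a) * (-1)^(n-i+b) = (-1)^(n+(a+b))"
      by (metis power_add)
    then show "(-1)^(i+a) * real (Q a i) * ((-1)^(n-i+b) * real (Q b (n-i))) =
        (-1)^(n+(a+b)) * (real (Q a i) * real (Q b (n-i)))" by (simp add: algebra_simps)
  qed simp
  also have "\<dots> = fps_nth (Fk (a+b)) n"
    by (simp add: Fk_def Q_conv sum_distrib_left atMost_atLeast0)
  finally show "fps_nth (Fk (a+b)) n = fps_nth (Fk a * Fk b) n" by simp
qed

lemma Fk_0: "Fk 0 = 1"
  by (rule fps_ext) (simp add: Fk_def Q0)

definition FF :: "real fps" where "FF = Fk 1"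

lemma Fk_pow: "Fk k = FF ^ k"
proof (induction k)
  case 0 then show ?case by (simp add: Fk_0)
next
  case (Suc k)
  have "Fk (Suc k) = Fk (1 + k)" by simp
  also have "\<dots> = Fk 1 * Fk k" by (rule Fk_add)
  finally show ?case using Suc by (simp add: FF_def)
qed

lemma Fk_Suc: "Fk (Suc k) = fps_X * (Fk k - Fk (k+3))"
proof (rule fps_ext)
  fix n show "fps_nth (Fk (Suc k)) n = fps_nth (fps_X * (Fk k - Fk (k+3))) n"
    by (cases n) (simp_all add: Fk_def algebra_simps power_add)
qed

lemma FF_eq: "FF + fps_X * FF ^ 3 = fps_X"
proof -
  have "FF = fps_X * (1 - FF^3)"
    using Fk_Suc[of 0] Fk_pow[of 3] by (simp add: FF_def Fk_0)
  then show ?thesis by (simp add: algebra_simps)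
qed

lemma FF_nth: "fps_nth FF n = (-1) ^ (n+1) * real (Q 1 n)"
  by (simp add: FF_def Fk_def)

lemma FF_small: "fps_nth FF 0 = 0" "fps_nth FF 1 = 1" "fps_nth FF 2 = 0" "fps_nth FF 3 = 0"
  by (simp_all add: FF_nth numeral_eq_Suc)

lemma FF_radius: "fps_conv_radius FF \<ge> ereal (1/4)"
proof -
  have "summable (\<lambda>n. fps_nth FF n * (1/4::real) ^ n)"
  proof (rule summable_comparison_test[OF _ summable_geometric[of "1/2::real"]])
    show "\<exists>N. \<forall>n\<ge>N. norm (fps_nth FF n * (1/4) ^ n) \<le> (1/2::real) ^ n"
    proof (intro exI allI impI)
      fix n :: nat
      have "real (Q 1 n) \<le> 2 ^ n" using Q_le[of 1 n] by (metis of_nat_le_iff of_nat_numeral of_nat_power)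
      then have "real (Q 1 n) * (1/4)^n \<le> 2^n * (1/4::real)^n" by (simp add: mult_right_mono)
      also have "\<dots> = (1/2)^n" by (simp add: power_mult_distrib[symmetric])
      finally show "norm (fps_nth FF n * (1/4) ^ n) \<le> (1/2::real) ^ n"
        by (simp add: FF_nth abs_mult power_abs)
    qed
  qed simp
  from conv_radius_geI[OF this] show ?thesis by (simp add: fps_conv_radius_def)
qed


lemma sinh3: "sinh (3 * u) = 3 * sinh u + 4 * sinh u ^ 3" for u :: real
proof -
  have "sinh (3*u) = sinh (u + (u + u))" by (simp add: algebra_simps)
  also have "\<dots> = sinh u * cosh (u+u) + cosh u * sinh (u+u)" by (rule sinh_add)
  also have "\<dots> = sinh u * (cosh u * cosh u + sinh u * sinh u) + cosh u * (2 * sinh u * cosh u)"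
    by (simp only: sinh_add cosh_add) (simp add: algebra_simps)
  also have "\<dots> = sinh u * ((cosh u)^2 + (sinh u)^2) + 2 * sinh u * (cosh u)^2"
    by (simp add: algebra_simps power2_eq_square)
  also have "\<dots> = 3 * sinh u + 4 * sinh u ^ 3"
    unfolding cosh_square_eq by (simp add: power2_eq_square power3_eq_cube algebra_simps)
  finally show ?thesis .
qed

lemma formula_cubic:
  fixes x :: real assumes x: "x > 0"
  defines "z \<equiv> 2 / sqrt (3 * x) * sinh (arsinh (3 * sqrt (3 * x ^ 3) / 2) / 3)"
  shows "z + x * z ^ 3 = x"
proof -
  define s where "s = sinh (arsinh (3 * sqrt (3 * x ^ 3) / 2) / 3)"
  define q where "q = sqrt (3*x)"
  have q: "q > 0" "q^2 = 3*x" using x by (auto simp: q_def)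
  have sq3: "sqrt (3 * x ^ 3) = x * q"
  proof -
    have "3 * x ^ 3 = x^2 * (3*x)" by (simp add: power3_eq_cube power2_eq_square)
    then have "sqrt (3 * x ^ 3) = sqrt (x^2) * q" by (simp add: q_def real_sqrt_mult)
    then show ?thesis using x by simp
  qed
  have "3 * s + 4 * s ^ 3 = sinh (3 * (arsinh (3 * sqrt (3 * x ^ 3) / 2) / 3))"
    using sinh3[of "arsinh (3 * sqrt (3 * x ^ 3) / 2) / 3"] by (simp add: s_def)
  also have "\<dots> = 3 * x * q / 2" by (simp add: sq3)
  finally have e: "3 * s + 4 * s ^ 3 = 3 * x * q / 2" .
  have zs: "z = 2 * s / q" by (simp add: z_def s_def q_def)
  have "(z + x * z ^ 3) * q = 2 * s + x * 8 * s^3 / q^2"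
    using q by (simp add: zs power3_eq_cube power2_eq_square field_simps)
  also have "\<dots> = 2 * s + 8 * s^3 / 3" using q x by (simp add: field_simps)
  also have "\<dots> = x * q" using e by (simp add: field_simps)
  finally show ?thesis using q by simp
qed

lemma cubic_unique:
  fixes x y z :: real assumes "x > 0" "y + x * y^3 = x" "z + x * z^3 = x"
  shows "y = z"
proof (rule ccontr)
  assume ne: "y \<noteq> z"
  have "(y - z) * (1 + x * (y^2 + y*z + z^2)) = 0"
    using assms by (simp add: algebra_simps power2_eq_square power3_eq_cube)
  moreover have "y^2 + y*z + z^2 \<ge> 0"
  proof -
    have "y^2 + y*z + z^2 = (y + z/2)^2 + 3/4 * z^2" by (simp add: algebra_simps power2_eq_square)
    also have "\<dots> \<ge> 0" by simp
    finally show ?thesis .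
  qed
  then have "1 + x * (y^2 + y*z + z^2) > 0" using assms(1) by (simp add: add_pos_nonneg)
  ultimately show False using ne by simp
qed

lemma FF_eval:
  fixes x :: real assumes x: "0 < x" "x < 1/4"
  shows "eval_fps FF x = 2 / sqrt (3 * x) * sinh (arsinh (3 * sqrt (3 * x ^ 3) / 2) / 3)"
proof -
  have r: "ereal (norm x) < fps_conv_radius FF"
  proof -
    have "ereal (norm x) < ereal (1/4)" using x by simp
    then show ?thesis using FF_radius by (rule order_less_le_trans)
  qed
  have r3: "ereal (norm x) < fps_conv_radius (FF^3)"
    using r fps_conv_radius_power[of FF 3] by (meson order_less_le_trans)
  have rX: "ereal (norm x) < fps_conv_radius (fps_X :: real fps)" by simp
  have rX3: "ereal (norm x) < fps_conv_radius (fps_X * FF^3)"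
    using fps_conv_radius_mult[of fps_X "FF^3"] r3 rX by (simp add: order_less_le_trans)
  have "eval_fps (FF + fps_X * FF^3) x = eval_fps FF x + x * eval_fps FF x ^ 3"
    by (simp add: eval_fps_add[OF r rX3] eval_fps_mult[OF rX r3] eval_fps_power[OF r])
  then have "eval_fps FF x + x * eval_fps FF x ^ 3 = x" using FF_eq by simp
  then show ?thesis using cubic_unique formula_cubic x(1) by blast
qed


lemma pat_len5: "pat_len = 5" by (simp add: pat_len_def sigma_def)

lemma all5: "(\<forall>a<(5::nat). P a) \<longleftrightarrow> P 0 \<and> P 1 \<and> P 2 \<and> P 3 \<and> P 4"
  by (auto simp: less_Suc_eq numeral_eq_Suc)

lemma occ_at_iff: "occ_at w i \<longleftrightarrow> i + 5 \<le> length w \<and> w!i < w!(i+3) \<and> w!(i+3) < w!(i+1) \<and>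
   w!(i+1) < w!(i+2) \<and> w!(i+2) < w!(i+4)"
  unfolding occ_at_def pat_len5 all5 by (auto simp: sigma_def)

lemma occ_len: "occ_at w i \<Longrightarrow> i + 5 \<le> length w"
  by (simp add: occ_at_iff)

lemma occ_block: assumes "occ_at w i"
  shows "w!i < w!(i+1)" "w!i < w!(i+2)" "w!i < w!(i+3)" "w!i < w!(i+4)"
    "w!(i+1) < w!(i+4)" "w!(i+2) < w!(i+4)" "w!(i+3) < w!(i+4)"
  using assms by (auto simp: occ_at_iff)

lemma occ_space: assumes "occ_at w i" "occ_at w j" "i < j" shows "i + 3 \<le> j"
proof (rule ccontr)
  assume "\<not> i + 3 \<le> j"
  then have "j = i + 1 \<or> j = i + 2" using assms(3) by auto
  moreover have a: "w!(i+3) < w!(i+1)" "w!(i+1) < w!(i+2)" using assms(1) by (simp_all add: occ_at_iff)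
  moreover have b: "w!(j+1) < w!(j+2)" "w!j < w!(j+3)" "w!(j+3) < w!(j+1)" using assms(2) by (simp_all add: occ_at_iff)
  moreover have "i + 1 + 1 = i + 2" "i + 1 + 2 = i + 3" "i + 2 + 1 = i + 3" by simp_all
  ultimately show False by (metis less_trans order.asym)
qed

lemma occ_at_drop: "occ_at (drop d w) i \<longleftrightarrow> occ_at w (i + d)"
  by (cases "d \<le> length w") (auto simp: occ_at_iff ac_simps)

lemma occ_at_take: "occ_at (take t w) i \<longleftrightarrow> occ_at w i \<and> i + 5 \<le> t"
  by (auto simp: occ_at_iff)

lemma occ_at_map_mono:
  assumes "\<And>x y. x \<in> set w \<Longrightarrow> y \<in> set w \<Longrightarrow> f x < f y \<longleftrightarrow> x < y"
  shows "occ_at (map f w) i \<longleftrightarrow> occ_at w i"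
proof -
  have "i + 5 \<le> length w \<Longrightarrow> a < 5 \<Longrightarrow> w!(i+a) \<in> set w" for a by simp
  then show ?thesis unfolding occ_at_iff using assms by auto
qed

lemma occs_finite: "finite (occs w)"
proof -
  have "occs w \<subseteq> {..length w}" by (auto simp: occs_def dest: occ_len)
  then show ?thesis by (rule finite_subset) simp
qed

definition clk :: "nat list \<Rightarrow> bool" where
  "clk w \<longleftrightarrow> 5 \<le> length w \<and> 0 \<in> occs w \<and> length w - 5 \<in> occs w \<and>
     (\<forall>i\<in>occs w. i < length w - 5 \<longrightarrow> i + 3 \<in> occs w \<or> i + 4 \<in> occs w)"

lemma occs_le: "i \<in> occs w \<Longrightarrow> i + 5 \<le> length w"
  by (simp add: occs_def occ_len)

lemma is_cluster_iff:
  assumes "length w > 0"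
  shows "is_cluster k w \<longleftrightarrow> card (occs w) = k \<and> clk w"
proof
  assume c: "is_cluster k w"
  let ?O = "occs w" and ?n = "length w"
  have cov: "\<forall>p<?n. \<exists>i\<in>?O. i \<le> p \<and> p < i + 5"
    and suc: "\<forall>i\<in>?O. \<forall>j\<in>?O. i < j \<and> (\<forall>l\<in>?O. \<not> (i < l \<and> l < j)) \<longrightarrow> j < i + 5"
    using c by (auto simp: is_cluster_def pat_len5)
  from cov assms obtain i0 where "i0 \<in> ?O" "i0 \<le> 0" by auto
  then have z: "0 \<in> ?O" by simp
  from cov assms obtain i1 where i1: "i1 \<in> ?O" "i1 \<le> ?n - 1" "?n - 1 < i1 + 5" by (meson diff_less zero_less_one)
  have "i1 + 5 \<le> ?n" using i1(1) by (rule occs_le)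
  then have l: "5 \<le> ?n" "i1 = ?n - 5" using i1 by auto
  have "i + 3 \<in> ?O \<or> i + 4 \<in> ?O" if "i \<in> ?O" "i < ?n - 5" for i
  proof -
    let ?S = "{l\<in>?O. i < l}"
    have ne: "?n - 5 \<in> ?S" using i1 l that by auto
    have fin: "finite ?S" using occs_finite by simp
    define j where "j = Min ?S"
    have jS: "j \<in> ?S" unfolding j_def using fin ne by (intro Min_in) auto
    have "\<forall>l\<in>?O. \<not> (i < l \<and> l < j)" using fin j_def by (metis (mono_tags, lifting) Min_le mem_Collect_eq not_le)
    then have "j < i + 5" using suc that(1) jS by blast
    moreover have "i + 3 \<le> j" using jS that(1) occ_space by (auto simp: occs_def)
    ultimately have "j = i + 3 \<or> j = i + 4" by auto
    then show ?thesis using jS by auto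
  qed
  moreover have "?n - 5 \<in> ?O" using i1(1) l(2) by simp
  ultimately show "card ?O = k \<and> clk w" using c z l by (auto simp: is_cluster_def clk_def)
next
  assume a: "card (occs w) = k \<and> clk w"
  let ?O = "occs w" and ?n = "length w"
  have z: "0 \<in> ?O" and e: "?n - 5 \<in> ?O" and l: "5 \<le> ?n"
    and s: "\<And>i. i \<in> ?O \<Longrightarrow> i < ?n - 5 \<Longrightarrow> i + 3 \<in> ?O \<or> i + 4 \<in> ?O"
    using a by (auto simp: clk_def)
  have cov: "\<exists>i\<in>?O. i \<le> p \<and> p < i + 5" if "p < ?n" for p
  proof -
    let ?S = "{l\<in>?O. l \<le> p}"
    have fin: "finite ?S" using occs_finite by simp
    have ne: "0 \<in> ?S" using z by simp
    define i where "i = Max ?S"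
    have iS: "i \<in> ?S" unfolding i_def using fin ne by (intro Max_in) auto
    have mx: "\<And>l. l \<in> ?O \<Longrightarrow> l \<le> p \<Longrightarrow> l \<le> i" using fin by (auto simp: i_def)
    show ?thesis
    proof (rule ccontr)
      assume "\<not> ?thesis"
      then have "i + 5 \<le> p" using iS by force
      then have "i < ?n - 5" using that by auto
      then have "i + 3 \<in> ?O \<or> i + 4 \<in> ?O" using s iS by auto
      then show False using mx \<open>i + 5 \<le> p\<close> by force
    qed
  qed
  have suc: "j < i + 5" if "i \<in> ?O" "j \<in> ?O" "i < j" "\<forall>l\<in>?O. \<not> (i < l \<and> l < j)" for i j
  proof -
    have "j + 5 \<le> ?n" using that(2) by (rule occs_le)
    then have "i < ?n - 5" using that(3) by auto
    then have "i + 3 \<in> ?O \<or> i + 4 \<in> ?O" using s that(1) by auto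
    then show ?thesis using that(4) by force
  qed
  show "is_cluster k w" using a cov suc by (auto simp: is_cluster_def pat_len5)
qed

lemma occ_min_chain:
  assumes "clk u" "i \<in> occs u" shows "u!0 \<le> u!i"
  using assms(2)
proof (induction i rule: less_induct)
  case (less i)
  let ?O = "occs u" and ?n = "length u"
  show ?case
  proof (cases "i = 0")
    case True then show ?thesis by simp
  next
    case False
    let ?S = "{l\<in>?O. l < i}"
    have fin: "finite ?S" using occs_finite by simp
    have ne: "0 \<in> ?S" using assms(1) False by (auto simp: clk_def)
    define i' where "i' = Max ?S"
    have iS: "i' \<in> ?S" unfolding i'_def using fin ne by (intro Max_in) auto
    have mx: "\<And>l. l \<in> ?O \<Longrightarrow> l < i \<Longrightarrow> l \<le> i'" using fin by (auto simp: i'_def)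
    have "i + 5 \<le> ?n" using less.prems by (rule occs_le)
    then have "i' < ?n - 5" using iS by auto
    then have o: "i' + 3 \<in> ?O \<or> i' + 4 \<in> ?O" using assms(1) iS by (auto simp: clk_def)
    have "i' + 3 \<le> i" using iS less.prems occ_space by (auto simp: occs_def)
    moreover have "i' + 3 \<in> ?O \<longrightarrow> \<not> i' + 3 < i" "i' + 4 \<in> ?O \<longrightarrow> \<not> i' + 4 < i"
      using mx by force+
    ultimately have "i = i' + 3 \<or> i = i' + 4" using o by auto
    moreover have occ': "occ_at u i'" using iS by (simp add: occs_def)
    ultimately have "u!i' \<le> u!i" using occ_block[OF occ'] by auto
    moreover have "u!0 \<le> u!i'" using less.IH iS by auto
    ultimately show ?thesis by simp
  qed
qed

lemma clk_min:
  assumes "clk u" "p < length u" shows "u!0 \<le> u!p"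
proof -
  let ?O = "occs u" and ?n = "length u"
  let ?S = "{l\<in>?O. l \<le> p}"
  have fin: "finite ?S" using occs_finite by simp
  have ne: "0 \<in> ?S" using assms(1) by (auto simp: clk_def)
  define i where "i = Max ?S"
  have iS: "i \<in> ?S" unfolding i_def using fin ne by (intro Max_in) auto
  have mx: "\<And>l. l \<in> ?O \<Longrightarrow> l \<le> p \<Longrightarrow> l \<le> i" using fin by (auto simp: i_def)
  have "p < i + 5"
  proof (rule ccontr)
    assume "\<not> p < i + 5"
    then have "i < ?n - 5" using assms(2) by auto
    then have "i + 3 \<in> ?O \<or> i + 4 \<in> ?O" using assms(1) iS by (auto simp: clk_def)
    then show False using mx \<open>\<not> p < i + 5\<close> by force
  qed
  then have "p = i \<or> p = i+1 \<or> p = i+2 \<or> p = i+3 \<or> p = i+4" using iS by auto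
  moreover have occ': "occ_at u i" using iS by (simp add: occs_def)
  ultimately have "u!i \<le> u!p" using occ_block[OF occ'] by auto
  moreover have "u!0 \<le> u!i" using occ_min_chain assms(1) iS by auto
  ultimately show ?thesis by simp
qed

lemma run_max:
  assumes "\<forall>i<j. occ_at w (3*i)" "1 \<le> j" "p \<le> 3*j+1"
  shows "w!p \<le> w!(3*j+1)"
  using assms
proof (induction j arbitrary: p)
  case 0 then show ?case by simp
next
  case (Suc j)
  show ?case
  proof (cases "j = 0")
    case True
    then have o: "occ_at w 0" using Suc.prems(1) by auto
    have "p = 0 \<or> p = 1 \<or> p = 2 \<or> p = 3 \<or> p = 4" using Suc.prems(3) True by auto
    moreover have "5 \<le> length w \<and> w!0 < w!3 \<and> w!3 < w!1 \<and> w!1 < w!2 \<and> w!2 < w!4"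
      using o unfolding occ_at_iff by (simp only: add_0_left)
    ultimately show ?thesis using True by (elim disjE) auto
  next
    case False
    have o: "occ_at w (3*j)" using Suc.prems(1) by auto
    have b: "w!(3*j+1) < w!(3*Suc j+1)" using occ_block(5)[OF o] by (simp add: add.commute)
    show ?thesis
    proof (cases "p \<le> 3*j+1")
      case True
      then have "w!p \<le> w!(3*j+1)" using Suc.IH[of p] Suc.prems(1) False by auto
      then show ?thesis using b by simp
    next
      case False
      then have "p = 3*j+2 \<or> p = 3*j+3 \<or> p = 3*j+4" using Suc.prems(3) by auto
      then show ?thesis using occ_block[OF o] by (auto simp: add.commute)
    qed
  qed
qed


definition RUN :: "nat \<Rightarrow> nat list set" where
  "RUN j = {v \<in> permutations_of_set {1..3*j+2}. \<forall>i<j. occ_at v (3*i)}"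

definition CLS :: "nat \<Rightarrow> nat \<Rightarrow> nat list set" where
  "CLS m k = {w \<in> permutations_of_set {1..m}. is_cluster k w}"

definition CLp :: "nat \<Rightarrow> nat \<Rightarrow> nat list set" where
  "CLp m k = (if m = 1 then (if k = 0 then {[1]} else {}) else if m < 5 then {} else CLS m k)"

definition glue :: "nat \<Rightarrow> nat list \<Rightarrow> nat list \<Rightarrow> nat list" where
  "glue j v u = v @ map (\<lambda>x. x + (3*j+1)) (tl u)"

lemma card_CLp: "card (CLp m k) = s_num m k"
  by (simp add: CLp_def s_num_def pat_len5 CLS_def)

lemma perm_len: "w \<in> permutations_of_set {1..m} \<Longrightarrow> length w = m"
  by (simp add: length_finite_permutations_of_set)

lemma perm_nth_in: "w \<in> permutations_of_set {1..m} \<Longrightarrow> p < m \<Longrightarrow> w!p \<in> {1..m}"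
  by (metis nth_mem perm_len permutations_of_setD(1))

lemma perm_hits: "w \<in> permutations_of_set {1..m} \<Longrightarrow> x \<in> {1..m} \<Longrightarrow> \<exists>p<m. w!p = x"
  by (metis in_set_conv_nth perm_len permutations_of_setD(1))

lemma min_is_1:
  assumes "w \<in> permutations_of_set {1..m}" "m \<ge> 1" "\<And>p. p < m \<Longrightarrow> w!0 \<le> w!p"
  shows "w!0 = 1"
proof -
  obtain p where "p < m" "w!p = 1" using perm_hits[OF assms(1), of 1] assms(2) by auto
  then have "w!0 \<le> 1" using assms(3) by metis
  moreover have "w!0 \<ge> 1" using perm_nth_in[OF assms(1), of 0] assms(2) by auto
  ultimately show ?thesis by simp
qed

lemma max_is_top:
  assumes "w \<in> permutations_of_set {1..m}" "q < m" "\<And>p. p < m \<Longrightarrow> w!p \<le> w!q"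
  shows "w!q = m"
proof -
  obtain p where "p < m" "w!p = m" using perm_hits[OF assms(1), of m] assms(2) by auto
  then have "m \<le> w!q" using assms(3) by metis
  moreover have "w!q \<le> m" using perm_nth_in[OF assms(1,2)] by auto
  ultimately show ?thesis by simp
qed

lemma RUN_top:
  assumes "v \<in> RUN j" "1 \<le> j" shows "v!(3*j+1) = 3*j+2"
proof -
  have p: "v \<in> permutations_of_set {1..3*j+2}" and o: "\<forall>i<j. occ_at v (3*i)" using assms(1) by (auto simp: RUN_def)
  show ?thesis by (rule max_is_top[OF p]) (use run_max[OF o assms(2)] in auto)
qed

lemma RUN_occs:
  assumes "v \<in> RUN j" shows "occs v = (\<lambda>i. 3*i) ` {..<j}"
proof
  have p: "v \<in> permutations_of_set {1..3*j+2}" and o: "\<forall>i<j. occ_at v (3*i)" using assms(1) by (auto simp: RUN_def)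
  show "(\<lambda>i. 3*i) ` {..<j} \<subseteq> occs v" using o by (auto simp: occs_def)
  show "occs v \<subseteq> (\<lambda>i. 3*i) ` {..<j}"
  proof
    fix i assume i: "i \<in> occs v"
    then have "i + 5 \<le> 3*j+2" using occs_le perm_len[OF p] by fastforce
    then have ij: "i div 3 < j" by linarith
    then have "occ_at v (3 * (i div 3))" using o by auto
    moreover have "3 * (i div 3) \<le> i" "i < 3 * (i div 3) + 3" by linarith+
    ultimately have "i = 3 * (i div 3)" using occ_space[of v "3 * (i div 3)" i] i
      by (metis occs_def le_neq_implies_less mem_Collect_eq not_le)
    then show "i \<in> (\<lambda>i. 3*i) ` {..<j}" using ij by blast
  qed
qed

lemma occ_prefix:
  assumes "length v \<le> length w" "\<forall>p<length v. w!p = v!p" "i + 5 \<le> length v"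
  shows "occ_at w i \<longleftrightarrow> occ_at v i"
  using assms unfolding occ_at_iff by auto

lemma occ_suffix:
  assumes "length w = N + length u" "\<forall>p. N \<le> p \<longrightarrow> p < length w \<longrightarrow> w!p = u!(p-N) + N"
  shows "occ_at w (i+N) \<longleftrightarrow> occ_at u i"
proof (cases "i + 5 \<le> length u")
  case True
  have e: "\<And>a. a < 5 \<Longrightarrow> w!(i+N+a) = u!(i+a) + N" using assms True by auto
  show ?thesis unfolding occ_at_iff using assms(1) True e[of 0] e[of 1] e[of 2] e[of 3] e[of 4]
    by (auto simp: ac_simps)
qed (use assms in \<open>auto simp: occ_at_iff\<close>)

definition good_u :: "nat \<Rightarrow> nat list \<Rightarrow> bool" where
  "good_u m u \<longleftrightarrow> u \<in> permutations_of_set {1..m} \<and> (m = 1 \<or> 5 \<le> m) \<and> u!0 = 1 \<and> (5 \<le> m \<longrightarrow> 0 \<in> occs u)"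

lemma glue_len: "v \<in> RUN j \<Longrightarrow> good_u m u \<Longrightarrow> length (glue j v u) = 3*j+1+m"
  by (auto simp: glue_def RUN_def good_u_def perm_len)

lemma glue_nth1: "v \<in> RUN j \<Longrightarrow> p < 3*j+2 \<Longrightarrow> glue j v u ! p = v!p"
  by (auto simp: glue_def RUN_def perm_len nth_append)

lemma glue_nth2:
  assumes "v \<in> RUN j" "1 \<le> j" "good_u m u" "3*j+1 \<le> p" "p < 3*j+1+m"
  shows "glue j v u ! p = u!(p-(3*j+1)) + (3*j+1)"
proof (cases "p = 3*j+1")
  case True
  then show ?thesis using assms RUN_top[OF assms(1,2)] glue_nth1[OF assms(1)] by (simp add: good_u_def)
next
  case False
  have lv: "length v = 3*j+2" using assms(1) by (simp add: RUN_def perm_len)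
  have lu: "length u = m" using assms(3) by (simp add: good_u_def perm_len)
  have "glue j v u ! p = map (\<lambda>x. x + (3*j+1)) (tl u) ! (p - (3*j+2))"
    using False assms(4) lv by (simp add: glue_def nth_append)
  also have "\<dots> = tl u ! (p - (3*j+2)) + (3*j+1)" using assms(5) lu False assms(4) by simp
  also have "\<dots> = u ! (p - (3*j+1)) + (3*j+1)" using assms(5) lu False assms(4)
    by (simp add: nth_tl Suc_diff_Suc)
  finally show ?thesis .
qed

lemma glue_occs:
  assumes "v \<in> RUN j" "1 \<le> j" "good_u m u"
  shows "occs (glue j v u) = occs v \<union> (\<lambda>i. i + (3*j+1)) ` occs u"
proof -
  let ?w = "glue j v u" and ?N = "3*j+1"
  have lv: "length v = 3*j+2" using assms(1) by (simp add: RUN_def perm_len)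
  have lu: "length u = m" using assms(3) by (simp add: good_u_def perm_len)
  have lw: "length ?w = ?N + m" using glue_len assms by simp
  have m1: "1 \<le> m" "m = 1 \<or> 5 \<le> m" using assms(3) by (auto simp: good_u_def)
  have pre: "occ_at ?w i \<longleftrightarrow> occ_at v i" if "i + 5 \<le> 3*j+2" for i
    by (rule occ_prefix) (use lv lw that m1 glue_nth1[OF assms(1)] in auto)
  have suf: "occ_at ?w (i + ?N) \<longleftrightarrow> occ_at u i" for i
    by (rule occ_suffix) (use lw lu glue_nth2[OF assms] in auto)
  have ov: "occ_at v i \<Longrightarrow> i + 5 \<le> 3*j+2" for i using occ_len lv by fastforce
  have v3: "occ_at ?w (3*j-3)"
  proof -
    have "occ_at v (3*(j-1))" using assms(1,2) by (auto simp: RUN_def)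
    moreover have "3*(j-1) = 3*j-3" by simp
    ultimately show ?thesis using pre[of "3*j-3"] assms(2) by auto
  qed
  show ?thesis
  proof (rule set_eqI)
    fix i
    show "i \<in> occs ?w \<longleftrightarrow> i \<in> occs v \<union> (\<lambda>i. i + ?N) ` occs u"
    proof (cases "i + 5 \<le> 3*j+2")
      case True
      then show ?thesis using pre[OF True] by (auto simp: occs_def)
    next
      case F: False
      show ?thesis
      proof (cases "?N \<le> i")
        case True
        then have "i = (i - ?N) + ?N" by simp
        then have "occ_at ?w i \<longleftrightarrow> occ_at u (i - ?N)" using suf by metis
        moreover have "\<not> occ_at v i" using F ov by blast
        ultimately show ?thesis using True by (force simp: occs_def)
      next
        case False
        have "\<not> occ_at ?w i"
        proof
          assume oi: "occ_at ?w i"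
          have "3*j-3 < i" using F assms(2) by linarith
          then have "3*j-3 + 3 \<le> i" using occ_space[OF v3 oi] by blast
          then have i3: "i = 3*j" using False assms(2) by linarith
          show False
          proof (cases "5 \<le> m")
            case True
            then have "occ_at u 0" using assms(3) by (simp add: good_u_def occs_def)
            then have "occ_at ?w (0 + ?N)" using suf by blast
            then show False using occ_space[OF oi, of ?N] i3 by simp
          next
            case False
            then show False using occ_len[OF oi] lw i3 m1 by simp
          qed
        qed
        then show ?thesis using F False ov by (auto simp: occs_def)
      qed
    qed
  qed
qed


lemma perm_set: "w \<in> permutations_of_set A \<Longrightarrow> set w = A" by (simp add: permutations_of_set_def)
lemma perm_dist: "w \<in> permutations_of_set A \<Longrightarrow> distinct w" by (simp add: permutations_of_set_def)

lemma good_u_tl: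
  assumes "good_u m u" shows "set (tl u) = {2..m}" "distinct (tl u)" "u = 1 # tl u"
proof -
  have p: "u \<in> permutations_of_set {1..m}" and m: "1 \<le> m" and h: "u!0 = 1"
    using assms by (auto simp: good_u_def)
  have ne: "u \<noteq> []" using perm_len[OF p] m by auto
  then show u: "u = 1 # tl u" using h by (metis hd_Cons_tl hd_conv_nth)
  have su: "set u = {1..m}" "distinct u" using p by (auto simp: permutations_of_set_def)
  then have d: "distinct (1 # tl u)" using u by simp
  then show "distinct (tl u)" by simp
  have "insert 1 (set (tl u)) = {1..m}" using su(1) u by (metis list.simps(15))
  moreover have "1 \<notin> set (tl u)" using d by simp
  ultimately have "set (tl u) = {1..m} - {1}" by (metis Diff_insert_absorb)
  also have "\<dots> = {2..m}" by auto
  finally show "set (tl u) = {2..m}" .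
qed

lemma glue_perm:
  assumes "v \<in> RUN j" "1 \<le> j" "good_u m u"
  shows "glue j v u \<in> permutations_of_set {1..3*j+1+m}"
proof -
  have sv: "set v = {1..3*j+2}" "distinct v" using assms(1) by (auto simp: RUN_def permutations_of_set_def)
  note t = good_u_tl[OF assms(3)]
  have m1: "1 \<le> m" using assms(3) by (auto simp: good_u_def)
  have st: "set (map (\<lambda>x. x + (3*j+1)) (tl u)) = {3*j+3..3*j+1+m}"
  proof -
    have "set (map (\<lambda>x. x + (3*j+1)) (tl u)) = (\<lambda>x. x + (3*j+1)) ` {2..m}" using t(1) by simp
    also have "\<dots> = {3*j+3..3*j+1+m}"
    proof (rule set_eqI, rule iffI)
      fix x assume "x \<in> {3*j+3..3*j+1+m}"
      then have "x = (x - (3*j+1)) + (3*j+1)" "x - (3*j+1) \<in> {2..m}" by auto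
      then show "x \<in> (\<lambda>x. x + (3*j+1)) ` {2..m}" by (rule image_eqI)
    qed auto
    finally show ?thesis .
  qed
  have "set (glue j v u) = {1..3*j+1+m}" using sv(1) st m1 by (auto simp: glue_def)
  moreover have "distinct (glue j v u)" using sv st t(2)
    by (auto simp: glue_def distinct_map inj_on_def)
  ultimately show ?thesis by (simp add: permutations_of_set_def)
qed

lemma CLp_good:
  assumes "u \<in> CLp m k"
  shows "good_u m u \<and> (m = 1 \<and> k = 0 \<and> occs u = {} \<or> 5 \<le> m \<and> clk u \<and> card (occs u) = k)"
proof (cases "m = 1")
  case True
  then have u: "u = [1]" "k = 0" using assms by (auto simp: CLp_def split: if_splits)
  have "occs [1] = {}" by (auto simp: occs_def occ_at_iff)
  moreover have "[1::nat] \<in> permutations_of_set {1..1}" by (simp add: permutations_of_set_def)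
  ultimately show ?thesis using u True by (simp add: good_u_def)
next
  case False
  then have m: "5 \<le> m" "u \<in> CLS m k" using assms by (auto simp: CLp_def split: if_splits)
  then have p: "u \<in> permutations_of_set {1..m}" and c: "is_cluster k u" by (auto simp: CLS_def)
  have "length u > 0" using perm_len[OF p] m by simp
  then have ck: "clk u" "card (occs u) = k" using is_cluster_iff c by auto
  have "u!0 = 1" by (rule min_is_1[OF p]) (use m clk_min[OF ck(1)] perm_len[OF p] in auto)
  moreover have "0 \<in> occs u" using ck by (simp add: clk_def)
  ultimately show ?thesis using m p ck by (simp add: good_u_def)
qed

lemma glue_CLS:
  assumes "v \<in> RUN j" "1 \<le> j" "u \<in> CLp m k'"
  shows "glue j v u \<in> CLS (3*j+1+m) (j+k')"
proof -
  note g = CLp_good[OF assms(3)]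
  then have gu: "good_u m u" by simp
  let ?w = "glue j v u" and ?N = "3*j+1"
  have O: "occs ?w = occs v \<union> (\<lambda>i. i + ?N) ` occs u" by (rule glue_occs[OF assms(1,2) gu])
  have Ov: "occs v = (\<lambda>i. 3*i) ` {..<j}" by (rule RUN_occs[OF assms(1)])
  have lw: "length ?w = ?N + m" using glue_len[OF assms(1) gu] by simp
  have cv: "card (occs v) = j" unfolding Ov by (subst card_image) (auto simp: inj_on_def)
  have cu: "card ((\<lambda>i. i + ?N) ` occs u) = k'" using g by (subst card_image) (auto simp: inj_on_def)
  have disj: "occs v \<inter> (\<lambda>i. i + ?N) ` occs u = {}" unfolding Ov by auto
  have card: "card (occs ?w) = j + k'" unfolding O
    by (subst card_Un_disjoint) (use disj cv cu occs_finite in auto)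
  have "clk ?w"
    unfolding clk_def
  proof (intro conjI ballI impI)
    show "5 \<le> length ?w" using lw assms(2) g by auto
    show "0 \<in> occs ?w" using O Ov assms(2) by auto
    show "length ?w - 5 \<in> occs ?w"
    proof (cases "m = 1")
      case True
      then have "length ?w - 5 = 3*(j-1)" using lw assms(2) by simp
      then show ?thesis using O Ov assms(2) by auto
    next
      case False
      then have "5 \<le> m" "clk u" using g by auto
      then have "m - 5 \<in> occs u" using perm_len gu by (auto simp: clk_def good_u_def)
      moreover have "length ?w - 5 = (m - 5) + ?N" using lw \<open>5 \<le> m\<close> by simp
      ultimately show ?thesis using O by auto
    qed
    fix i assume i: "i \<in> occs ?w" "i < length ?w - 5"
    show "i + 3 \<in> occs ?w \<or> i + 4 \<in> occs ?w"
    proof (cases "i \<in> occs v")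
      case True
      then obtain i' where i': "i' < j" "i = 3*i'" using Ov by auto
      show ?thesis
      proof (cases "i' + 1 < j")
        case True
        then have "i + 3 \<in> occs v" using Ov i' by (auto simp: image_iff intro!: bexI[of _ "i'+1"])
        then show ?thesis using O by auto
      next
        case False
        then have i'j: "i' = j - 1" using i' by simp
        have "m \<noteq> 1" using i lw i'j i' by auto
        then have "0 \<in> occs u" using g by (auto simp: clk_def)
        moreover have "i + 4 = 0 + ?N" using i'j i' assms(2) by simp
        ultimately show ?thesis using O by (metis UnI2 image_eqI)
      qed
    next
      case False
      then obtain i'' where i'': "i'' \<in> occs u" "i = i'' + ?N" using O i by auto
      then have "5 \<le> m" "clk u" using g by auto
      moreover have "i'' < length u - 5" using i i'' lw perm_len gu by (auto simp: good_u_def)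
      ultimately have "i'' + 3 \<in> occs u \<or> i'' + 4 \<in> occs u" using i'' by (auto simp: clk_def)
      then show ?thesis using O i'' by (auto simp: image_iff ac_simps)
    qed
  qed
  then have "is_cluster (j+k') ?w" using is_cluster_iff[of ?w "j+k'"] card lw by simp
  then show ?thesis using glue_perm[OF assms(1,2) gu] by (simp add: CLS_def)
qed

lemma glue_j:
  assumes "v \<in> RUN j" "1 \<le> j" "good_u m u"
  shows "\<forall>i<j. 3*i \<in> occs (glue j v u)" "3*j \<notin> occs (glue j v u)"
  using glue_occs[OF assms] RUN_occs[OF assms(1)] by auto


lemma glue_card:
  assumes "v \<in> RUN j" "1 \<le> j" "good_u m u"
  shows "card (occs (glue j v u)) = j + card (occs u)"
proof -
  let ?N = "3*j+1"
  have O: "occs (glue j v u) = occs v \<union> (\<lambda>i. i + ?N) ` occs u" by (rule glue_occs[OF assms])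
  have Ov: "occs v = (\<lambda>i. 3*i) ` {..<j}" by (rule RUN_occs[OF assms(1)])
  have cv: "card (occs v) = j" unfolding Ov by (subst card_image) (auto simp: inj_on_def)
  have cu: "card ((\<lambda>i. i + ?N) ` occs u) = card (occs u)" by (subst card_image) (auto simp: inj_on_def)
  have disj: "occs v \<inter> (\<lambda>i. i + ?N) ` occs u = {}" unfolding Ov by auto
  show ?thesis unfolding O
    by (subst card_Un_disjoint) (use disj cv cu occs_finite in auto)
qed

lemma split_vals:
  assumes p: "w \<in> permutations_of_set {1..n}" and Nn: "N < n"
    and mx: "\<forall>p\<le>N. w!p \<le> w!N" and mn: "\<forall>p. N \<le> p \<longrightarrow> p < n \<longrightarrow> w!N \<le> w!p"
  shows "w!N = N+1" "set (take (N+1) w) = {1..N+1}" "set (drop N w) = {N+1..n}"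
proof -
  have l: "length w = n" using perm_len[OF p] .
  have d: "distinct w" using p by (simp add: permutations_of_set_def)
  let ?A = "set (take (N+1) w)" and ?B = "set (drop N w)"
  have A: "?A \<subseteq> {1..w!N}"
  proof
    fix x assume "x \<in> ?A"
    then obtain q where q: "q < length (take (N+1) w)" "x = take (N+1) w ! q" by (metis in_set_conv_nth)
    then have "q \<le> N" "q < n" "x = w!q" using l Nn by auto
    then show "x \<in> {1..w!N}" using mx perm_nth_in[OF p] by force
  qed
  have cA: "card ?A = N+1" using d l Nn by (simp add: distinct_card)
  have B: "?B \<subseteq> {w!N..n}"
  proof
    fix x assume "x \<in> ?B"
    then obtain q where q: "q < length (drop N w)" "x = drop N w ! q" by (metis in_set_conv_nth)
    then have "N + q < n" "x = w!(N+q)" using l Nn by auto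
    then show "x \<in> {w!N..n}" using mn perm_nth_in[OF p] by force
  qed
  have cB: "card ?B = n - N" using d l by (simp add: distinct_card)
  have "N+1 \<le> w!N" using card_mono[OF _ A] cA by simp
  moreover have "n - N \<le> n + 1 - w!N" using card_mono[OF _ B] cB by simp
  moreover have "w!N \<le> n" using perm_nth_in[OF p Nn] by simp
  ultimately show e: "w!N = N+1" using Nn by linarith
  show "?A = {1..N+1}" using card_subset_eq[of "{1..N+1}" ?A] A cA e by simp
  show "?B = {N+1..n}" using card_subset_eq[of "{N+1..n}" ?B] B cB e Nn by simp
qed

lemma clk_cong: "length u = length d \<Longrightarrow> occs u = occs d \<Longrightarrow> clk u = clk d"
  by (simp add: clk_def)

lemma decomp:
  assumes w: "w \<in> CLS n k" and n1: "1 \<le> n"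
  shows "\<exists>j v u m k'. 1 \<le> j \<and> v \<in> RUN j \<and> u \<in> CLp m k' \<and> n = 3*j+1+m \<and> k = j+k' \<and> w = glue j v u"
proof -
  have p: "w \<in> permutations_of_set {1..n}" and c: "is_cluster k w" using w by (auto simp: CLS_def)
  have l: "length w = n" using perm_len[OF p] .
  have ck: "clk w" "card (occs w) = k" using is_cluster_iff[of w k] c l n1 by auto
  let ?O = "occs w"
  have z: "0 \<in> ?O" and e5: "n - 5 \<in> ?O" and n5: "5 \<le> n"
    and sc: "\<And>i. i \<in> ?O \<Longrightarrow> i < n - 5 \<Longrightarrow> i + 3 \<in> ?O \<or> i + 4 \<in> ?O"
    using ck(1) l by (auto simp: clk_def)
  have ex: "\<exists>j. 3*j \<notin> ?O"
  proof
    show "3*n \<notin> ?O" using occs_le[of "3*n" w] l n1 by auto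
  qed
  define j where "j = (LEAST j. 3*j \<notin> ?O)"
  have j3: "3*j \<notin> ?O" unfolding j_def by (rule LeastI_ex[OF ex])
  have below: "\<forall>i<j. 3*i \<in> ?O" unfolding j_def using not_less_Least by blast
  have j1: "1 \<le> j" using j3 z by (cases j) auto
  have jm: "3*(j-1) \<in> ?O" using below j1 by simp
  have "3*(j-1) + 5 \<le> n" using occs_le[OF jm] l by simp
  then have j2: "3*j+2 \<le> n" using j1 by simp
  define N where "N = 3*j+1"
  define m where "m = n - N"
  have nNm: "n = N + m" using j2 by (simp add: m_def N_def)
  have mcase: "m = 1 \<or> (5 \<le> m \<and> N \<in> ?O)"
  proof (cases "3*(j-1) = n - 5")
    case True
    have "m = 1" using True j1 n5 unfolding m_def N_def by linarith
    then show ?thesis by simp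
  next
    case False
    then have "3*(j-1) < n - 5" using \<open>3*(j-1) + 5 \<le> n\<close> by simp
    then have "3*(j-1) + 3 \<in> ?O \<or> 3*(j-1) + 4 \<in> ?O" using sc jm by blast
    moreover have "3*(j-1) + 3 = 3*j" "3*(j-1)+4 = N" using j1 by (simp_all add: N_def)
    ultimately have NO: "N \<in> ?O" using j3 by auto
    then have "N + 5 \<le> n" using occs_le l by fastforce
    then have "5 \<le> m" by (simp add: m_def)
    then show ?thesis using NO by simp
  qed
  have oc: "\<forall>i<j. occ_at w (3*i)" using below by (simp add: occs_def)
  have Nn: "N < n" using j2 by (simp add: N_def)
  have runmax: "\<forall>p\<le>N. w!p \<le> w!N" using run_max[OF oc j1] by (simp add: N_def)
  define d where "d = drop N w"
  have ld: "length d = m" using l by (simp add: d_def m_def)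
  have od: "occs d = {i. i + N \<in> ?O}" by (simp add: d_def occs_def occ_at_drop)
  have clkd: "clk d" if "5 \<le> m" "N \<in> ?O"
    unfolding clk_def
  proof (intro conjI ballI impI)
    show "5 \<le> length d" using ld that by simp
    show "0 \<in> occs d" using od that by simp
    show "length d - 5 \<in> occs d" using od ld e5 nNm that by (simp add: ac_simps)
    fix i assume "i \<in> occs d" "i < length d - 5"
    then have "i + N \<in> ?O" "i + N < n - 5" using od ld nNm by auto
    then have "i + N + 3 \<in> ?O \<or> i + N + 4 \<in> ?O" using sc by blast
    then show "i + 3 \<in> occs d \<or> i + 4 \<in> occs d" using od by (simp add: ac_simps)
  qed
  have tailmin: "\<forall>p. N \<le> p \<longrightarrow> p < n \<longrightarrow> w!N \<le> w!p"
  proof (intro allI impI)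
    fix p assume pp: "N \<le> p" "p < n"
    show "w!N \<le> w!p"
    proof (cases "m = 1")
      case True then have "p = N" using pp nNm by simp
      then show ?thesis by simp
    next
      case False
      then have "5 \<le> m" "N \<in> ?O" using mcase by auto
      then have "d!0 \<le> d!(p-N)" using clk_min[OF clkd] ld pp nNm by auto
      then show ?thesis using pp Nn l by (simp add: d_def)
    qed
  qed
  note sv = split_vals[OF p Nn runmax tailmin]
  define v where "v = take (3*j+2) w"
  define u where "u = map (\<lambda>x. x - N) d"
  have dw: "distinct w" using p by (simp add: permutations_of_set_def)
  have vR: "v \<in> RUN j"
  proof -
    have "set v = {1..3*j+2}" using sv(2) by (simp add: v_def N_def)
    moreover have "distinct v" using dw by (simp add: v_def)
    moreover have "\<forall>i<j. occ_at v (3*i)" using oc by (auto simp: v_def occ_at_take)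
    ultimately show ?thesis by (simp add: RUN_def permutations_of_set_def)
  qed
  have sd: "set d = {N+1..n}" using sv(3) by (simp add: d_def)
  have up: "u \<in> permutations_of_set {1..m}"
  proof -
    have "set u = (\<lambda>x. x - N) ` {N+1..n}" using sd by (simp add: u_def)
    also have "\<dots> = {1..m}"
    proof (rule set_eqI, rule iffI)
      fix x assume "x \<in> {1..m}"
      then have "x = (x + N) - N" "x + N \<in> {N+1..n}" using nNm by auto
      then show "x \<in> (\<lambda>x. x - N) ` {N+1..n}" by (rule image_eqI)
    qed (auto simp: m_def)
    finally have "set u = {1..m}" .
    moreover have "distinct u" using dw sd by (auto simp: u_def d_def distinct_map inj_on_def)
    ultimately show ?thesis by (simp add: permutations_of_set_def)
  qed
  have u0: "u!0 = 1" using sv(1) Nn l by (simp add: u_def d_def)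
  have ou: "occs u = occs d"
  proof -
    have "occ_at u i \<longleftrightarrow> occ_at d i" for i unfolding u_def
      by (rule occ_at_map_mono) (use sd in auto)
    then show ?thesis by (simp add: occs_def)
  qed
  have lu: "length u = m" using ld by (simp add: u_def)
  have gu: "good_u m u" using up mcase u0 ou od by (auto simp: good_u_def)
  have wg: "w = glue j v u"
  proof (rule nth_equalityI)
    show "length w = length (glue j v u)" using glue_len[OF vR gu] l nNm by (simp add: N_def)
    fix q assume "q < length w"
    then have q: "q < n" using l by simp
    show "w!q = glue j v u ! q"
    proof (cases "q < 3*j+2")
      case True then show ?thesis using glue_nth1[OF vR True] by (simp add: v_def)
    next
      case False
      then have g: "glue j v u ! q = u!(q-N) + N" using glue_nth2[OF vR j1 gu, of q] q nNm by (simp add: N_def)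
      have qN: "N \<le> q" "q - N < length d" using False q ld nNm by (auto simp: N_def)
      have "d!(q-N) = w!q" using qN(1) Nn l by (simp add: d_def)
      then have "w!q \<in> set d" using qN(2) by (metis nth_mem)
      then have "N + 1 \<le> w!q" using sd by auto
      moreover have "u!(q-N) = w!q - N" using False q l lu nNm by (simp add: u_def d_def N_def)
      ultimately show ?thesis using g by simp
    qed
  qed
  define k' where "k' = card (occs u)"
  have kk: "k = j + k'" using glue_card[OF vR j1 gu] wg ck(2) by (simp add: k'_def)
  have uC: "u \<in> CLp m k'"
  proof (cases "m = 1")
    case True
    then have "u = [1]" using lu u0 by (cases u) auto
    moreover have "occs [1] = {}" by (auto simp: occs_def occ_at_iff)
    ultimately show ?thesis using True by (simp add: CLp_def k'_def)
  next
    case False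
    then have m5: "5 \<le> m" "N \<in> ?O" using mcase by auto
    have "clk u" using clkd[OF m5] clk_cong[of u d] lu ld ou by simp
    then have "is_cluster k' u" using is_cluster_iff[of u k'] lu m5 by (simp add: k'_def)
    then show ?thesis using up m5 False by (simp add: CLp_def CLS_def)
  qed
  have "n = 3*j+1+m" using nNm by (simp add: N_def)
  with j1 vR uC kk wg show ?thesis by blast
qed


lemma RUN_finite: "finite (RUN j)"
  by (rule finite_subset[of _ "permutations_of_set {1..3*j+2}"]) (auto simp: RUN_def)

lemma CLp_finite: "finite (CLp m k)"
proof -
  have "CLS m k \<subseteq> permutations_of_set {1..m}" by (auto simp: CLS_def)
  then have "finite (CLS m k)" by (rule finite_subset) simp
  then show ?thesis by (simp add: CLp_def)
qed

lemma glue_inj: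
  assumes "v \<in> RUN j" "v' \<in> RUN j" "good_u m u" "good_u m' u'" "glue j v u = glue j v' u'"
  shows "v = v' \<and> u = u'"
proof -
  have lv: "length v = 3*j+2" "length v' = 3*j+2" using assms(1,2) by (auto simp: RUN_def perm_len)
  have "take (3*j+2) (glue j v u) = v" "take (3*j+2) (glue j v' u') = v'" using lv by (simp_all add: glue_def)
  then have vv: "v = v'" using assms(5) by simp
  have "drop (3*j+2) (glue j v u) = map (\<lambda>x. x + (3*j+1)) (tl u)"
       "drop (3*j+2) (glue j v' u') = map (\<lambda>x. x + (3*j+1)) (tl u')" using lv by (simp_all add: glue_def)
  then have "map (\<lambda>x. x + (3*j+1)) (tl u) = map (\<lambda>x. x + (3*j+1)) (tl u')" using assms(5) by simp
  then have "tl u = tl u'" by (simp add: inj_map_eq_map inj_on_def)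
  then have "u = u'" using good_u_tl(3)[OF assms(3)] good_u_tl(3)[OF assms(4)] by metis
  then show ?thesis using vv by simp
qed

lemma s_rec:
  assumes n5: "5 \<le> n"
  shows "s_num n k = (\<Sum>j\<in>{j. 1 \<le> j \<and> 3*j+2 \<le> n \<and> j \<le> k}. card (RUN j) * s_num (n - (3*j+1)) (k - j))"
proof -
  define J where "J = {j. 1 \<le> j \<and> 3*j+2 \<le> n \<and> j \<le> k}"
  define G where "G j = (\<lambda>(v,u). glue j v u) ` (RUN j \<times> CLp (n - (3*j+1)) (k - j))" for j
  have eq: "CLS n k = (\<Union>j\<in>J. G j)"
  proof
    show "CLS n k \<subseteq> (\<Union>j\<in>J. G j)"
    proof
      fix w assume "w \<in> CLS n k"
      then obtain j v u m k' where d: "1 \<le> j" "v \<in> RUN j" "u \<in> CLp m k'" "n = 3*j+1+m" "k = j+k'" "w = glue j v u"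
        using decomp n5 by (metis le_trans one_le_numeral)
      have "m = 1 \<or> 5 \<le> m" using CLp_good[OF d(3)] by (simp add: good_u_def)
      then have "j \<in> J" using d by (auto simp: J_def)
      moreover have "w \<in> G j" using d by (auto simp: G_def)
      ultimately show "w \<in> (\<Union>j\<in>J. G j)" by blast
    qed
    show "(\<Union>j\<in>J. G j) \<subseteq> CLS n k"
    proof
      fix w assume "w \<in> (\<Union>j\<in>J. G j)"
      then obtain j v u where j: "j \<in> J" "v \<in> RUN j" "u \<in> CLp (n - (3*j+1)) (k - j)" "w = glue j v u"
        by (auto simp: G_def)
      have "glue j v u \<in> CLS (3*j+1+(n - (3*j+1))) (j + (k - j))"
        by (rule glue_CLS) (use j in \<open>auto simp: J_def\<close>)
      moreover have "3*j+1+(n - (3*j+1)) = n" "j + (k - j) = k" using j(1) by (auto simp: J_def)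
      ultimately show "w \<in> CLS n k" using j(4) by simp
    qed
  qed
  have finJ: "finite J" by (rule finite_subset[of _ "{..n}"]) (auto simp: J_def)
  have finG: "\<And>j. finite (G j)" using RUN_finite CLp_finite by (simp add: G_def)
  have disj: "\<forall>i\<in>J. \<forall>j\<in>J. i \<noteq> j \<longrightarrow> G i \<inter> G j = {}"
  proof (intro ballI impI)
    fix i j assume ij: "i \<in> J" "j \<in> J" "i \<noteq> j"
    show "G i \<inter> G j = {}"
    proof (rule ccontr)
      assume "G i \<inter> G j \<noteq> {}"
      then obtain v u v' u' where a: "v \<in> RUN i" "u \<in> CLp (n - (3*i+1)) (k - i)"
        "v' \<in> RUN j" "u' \<in> CLp (n - (3*j+1)) (k - j)" "glue i v u = glue j v' u'"
        by (auto simp: G_def)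
      have gi: "\<forall>l<i. 3*l \<in> occs (glue i v u)" "3*i \<notin> occs (glue i v u)"
        using glue_j[OF a(1) _ conjunct1[OF CLp_good[OF a(2)]]] ij by (auto simp: J_def)
      have gj: "\<forall>l<j. 3*l \<in> occs (glue j v' u')" "3*j \<notin> occs (glue j v' u')"
        using glue_j[OF a(3) _ conjunct1[OF CLp_good[OF a(4)]]] ij by (auto simp: J_def)
      show False using gi gj a(5) ij(3) by (metis linorder_neqE_nat)
    qed
  qed
  have cG: "card (G j) = card (RUN j) * s_num (n - (3*j+1)) (k - j)" if "j \<in> J" for j
  proof -
    have "inj_on (\<lambda>(v,u). glue j v u) (RUN j \<times> CLp (n - (3*j+1)) (k - j))"
    proof (rule inj_onI, clarify)
      fix v u v' u' assume "v \<in> RUN j" "u \<in> CLp (n - (3*j+1)) (k - j)" "v' \<in> RUN j"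
        "u' \<in> CLp (n - (3*j+1)) (k - j)" "glue j v u = glue j v' u'"
      then show "v = v' \<and> u = u'" using glue_inj CLp_good by blast
    qed
    then show ?thesis by (simp add: G_def card_image card_cartesian_product card_CLp)
  qed
  have "s_num n k = card (CLS n k)" using n5 by (simp add: s_num_def pat_len5 CLS_def)
  also have "\<dots> = (\<Sum>j\<in>J. card (G j))" unfolding eq by (rule card_UN_disjoint[OF finJ]) (use finG disj in auto)
  also have "\<dots> = (\<Sum>j\<in>J. card (RUN j) * s_num (n - (3*j+1)) (k - j))" by (rule sum.cong) (use cG in auto)
  finally show ?thesis by (simp add: J_def)
qed


definition pos :: "nat list \<Rightarrow> nat \<Rightarrow> nat" where "pos u p = (LEAST i. u!i = p)"

lemma pos_nth: assumes "distinct u" "i < length u" shows "pos u (u!i) = i"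
  unfolding pos_def
proof (rule Least_equality)
  fix y assume y: "u!y = u!i"
  show "i \<le> y"
  proof (rule ccontr)
    assume "\<not> i \<le> y"
    then have "y < length u" "y \<noteq> i" using assms(2) by auto
    then show False using nth_eq_iff_index_eq[OF assms(1) \<open>y < length u\<close> assms(2)] y by simp
  qed
qed simp

lemma pos_in: assumes "distinct u" "p \<in> set u" shows "pos u p < length u \<and> u!(pos u p) = p"
proof -
  obtain i where "i < length u" "u!i = p" using assms(2) by (auto simp: in_set_conv_nth)
  then show ?thesis using pos_nth[OF assms(1)] by auto
qed

definition psi :: "nat \<Rightarrow> nat list \<Rightarrow> nat list" where
  "psi N u = map (\<lambda>p. Suc (pos u p)) [0..<N]"
definition phi :: "nat \<Rightarrow> nat list \<Rightarrow> nat list" where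
  "phi N v = map (\<lambda>k. pos v (Suc k)) [0..<N]"

lemma psi_nth: "p < N \<Longrightarrow> psi N u ! p = Suc (pos u p)" by (simp add: psi_def)
lemma phi_nth: "k < N \<Longrightarrow> phi N v ! k = pos v (Suc k)" by (simp add: phi_def)

lemma perm0: assumes "u \<in> permutations_of_set {0..<N}" shows "distinct u" "set u = {0..<N}" "length u = N"
  using assms by (auto simp: permutations_of_set_def length_finite_permutations_of_set)
lemma perm1: assumes "v \<in> permutations_of_set {1..N}" shows "distinct v" "set v = {1..N}" "length v = N"
  using assms by (auto simp: permutations_of_set_def length_finite_permutations_of_set)

lemma psi_perm: assumes "u \<in> permutations_of_set {0..<N}" shows "psi N u \<in> permutations_of_set {1..N}"
proof -
  note u = perm0[OF assms]
  have pr: "p < N \<Longrightarrow> pos u p < N \<and> u!(pos u p) = p" for p using pos_in[OF u(1)] u by auto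
  have sub: "set (psi N u) \<subseteq> {1..N}" using pr by (auto simp: psi_def Suc_le_eq)
  have "inj_on (\<lambda>p. Suc (pos u p)) {0..<N}"
  proof (rule inj_onI)
    fix p q assume a: "p \<in> {0..<N}" "q \<in> {0..<N}" "Suc (pos u p) = Suc (pos u q)"
    have "p = u!(pos u p)" using pr[of p] a(1) by simp
    also have "\<dots> = u!(pos u q)" using a(3) by simp
    also have "\<dots> = q" using pr[of q] a(2) by simp
    finally show "p = q" .
  qed
  then have d: "distinct (psi N u)" unfolding psi_def distinct_map by simp
  moreover have "card (set (psi N u)) = N" using distinct_card[OF d] by (simp add: psi_def)
  ultimately have "set (psi N u) = {1..N}" using card_subset_eq[OF _ sub] by simp
  with \<open>distinct (psi N u)\<close> show ?thesis by (simp add: permutations_of_set_def)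
qed

lemma phi_perm: assumes "v \<in> permutations_of_set {1..N}" shows "phi N v \<in> permutations_of_set {0..<N}"
proof -
  note v = perm1[OF assms]
  have pr: "k < N \<Longrightarrow> pos v (Suc k) < N \<and> v!(pos v (Suc k)) = Suc k" for k using pos_in[OF v(1)] v by auto
  have sub: "set (phi N v) \<subseteq> {0..<N}" using pr by (auto simp: phi_def)
  have "inj_on (\<lambda>k. pos v (Suc k)) {0..<N}"
  proof (rule inj_onI)
    fix p q assume a: "p \<in> {0..<N}" "q \<in> {0..<N}" "pos v (Suc p) = pos v (Suc q)"
    have "Suc p = v!(pos v (Suc p))" using pr[of p] a(1) by simp
    also have "\<dots> = v!(pos v (Suc q))" using a(3) by simp
    also have "\<dots> = Suc q" using pr[of q] a(2) by simp
    finally show "p = q" by simp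
  qed
  then have d: "distinct (phi N v)" unfolding phi_def distinct_map by simp
  moreover have "card (set (phi N v)) = N" using distinct_card[OF d] by (simp add: phi_def)
  ultimately have "set (phi N v) = {0..<N}" using card_subset_eq[OF _ sub] by simp
  with \<open>distinct (phi N v)\<close> show ?thesis by (simp add: permutations_of_set_def)
qed

lemma phi_psi: assumes "u \<in> permutations_of_set {0..<N}" shows "phi N (psi N u) = u"
proof (rule nth_equalityI)
  note u = perm0[OF assms]
  note w = perm1[OF psi_perm[OF assms]]
  show "length (phi N (psi N u)) = length u" using u by (simp add: phi_def)
  fix k assume "k < length (phi N (psi N u))"
  then have k: "k < N" by (simp add: phi_def)
  have "u!k \<in> set u" using u(3) k by simp
  then have uk: "u!k < N" using u(2) by simp
  have "psi N u ! (u!k) = Suc k" using psi_nth[OF uk] pos_nth[OF u(1)] u k by simp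
  then have "pos (psi N u) (Suc k) = u!k" using pos_nth[OF w(1), of "u!k"] w uk by simp
  then show "phi N (psi N u) ! k = u ! k" using phi_nth[OF k] by simp
qed

lemma psi_phi: assumes "v \<in> permutations_of_set {1..N}" shows "psi N (phi N v) = v"
proof (rule nth_equalityI)
  note v = perm1[OF assms]
  note w = perm0[OF phi_perm[OF assms]]
  show "length (psi N (phi N v)) = length v" using v by (simp add: psi_def)
  fix p assume "p < length (psi N (phi N v))"
  then have p: "p < N" by (simp add: psi_def)
  have "v!p \<in> set v" using v(3) p by simp
  then have vp: "v!p \<in> {1..N}" using v(2) by simp
  then have k: "v!p - 1 < N" by auto
  have "phi N v ! (v!p - 1) = p" using phi_nth[OF k] pos_nth[OF v(1)] v p vp by simp
  then have "pos (phi N v) p = v!p - 1" using pos_nth[OF w(1), of "v!p - 1"] w k by simp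
  then show "psi N (phi N v) ! p = v ! p" using psi_nth[OF p] vp by simp
qed

lemma psi_order:
  assumes "u \<in> permutations_of_set {0..<N}" "p < N" "q < N"
  shows "psi N u ! p < psi N u ! q \<longleftrightarrow> pos u p < pos u q"
  using assms by (simp add: psi_nth)

definition Rr :: "(nat \<times> nat) set" where
  "Rr = {(p,q). \<exists>i. (p = 3*i \<and> q = 3*i+3) \<or> (p = 3*i+3 \<and> q = 3*i+1) \<or> (p = 3*i+1 \<and> q = 3*i+2) \<or> (p = 3*i+2 \<and> q = 3*i+4)}"

definition okR :: "nat list \<Rightarrow> bool" where
  "okR u \<longleftrightarrow> (\<forall>a b. a < length u \<longrightarrow> b < length u \<longrightarrow> (u!a, u!b) \<in> Rr \<longrightarrow> a < b)"

definition vok :: "nat \<Rightarrow> nat list \<Rightarrow> bool" where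
  "vok N v \<longleftrightarrow> (\<forall>p q. (p,q) \<in> Rr \<longrightarrow> p < N \<longrightarrow> q < N \<longrightarrow> v!p < v!q)"

lemma vok_psi:
  assumes "u \<in> permutations_of_set {0..<N}"
  shows "vok N (psi N u) \<longleftrightarrow> okR u"
proof -
  note u = perm0[OF assms]
  have pr: "p < N \<Longrightarrow> pos u p < N \<and> u!(pos u p) = p" for p using pos_in[OF u(1)] u by auto
  have un: "a < N \<Longrightarrow> u!a < N" for a
  proof -
    assume "a < N" then have "u!a \<in> set u" using u(3) by simp
    then show ?thesis using u(2) by simp
  qed
  show ?thesis
  proof
    assume h: "vok N (psi N u)"
    show "okR u" unfolding okR_def
    proof (intro allI impI)
      fix a b assume ab: "a < length u" "b < length u" "(u!a, u!b) \<in> Rr"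
      then have "psi N u ! (u!a) < psi N u ! (u!b)" using h un u by (auto simp: vok_def)
      then show "a < b" using psi_order[OF assms un un] ab u pos_nth[OF u(1)] by simp
    qed
  next
    assume h: "okR u"
    show "vok N (psi N u)" unfolding vok_def
    proof (intro allI impI)
      fix p q assume pq: "(p,q) \<in> Rr" "p < N" "q < N"
      then have "(u!(pos u p), u!(pos u q)) \<in> Rr" using pr by simp
      then have "pos u p < pos u q" using h pr pq u by (auto simp: okR_def)
      then show "psi N u ! p < psi N u ! q" using psi_order[OF assms pq(2,3)] by simp
    qed
  qed
qed

lemma card_bridge:
  "card {v \<in> permutations_of_set {1..N}. vok N v} = card {u \<in> permutations_of_set {0..<N}. okR u}"
proof -
  have "bij_betw (psi N) {u \<in> permutations_of_set {0..<N}. okR u} {v \<in> permutations_of_set {1..N}. vok N v}"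
  proof (rule bij_betw_byWitness[where f' = "phi N"])
    show "\<forall>a\<in>{u \<in> permutations_of_set {0..<N}. okR u}. phi N (psi N a) = a"
    proof
      fix a assume "a \<in> {u \<in> permutations_of_set {0..<N}. okR u}"
      then show "phi N (psi N a) = a" using phi_psi by simp
    qed
    show "\<forall>a'\<in>{v \<in> permutations_of_set {1..N}. vok N v}. psi N (phi N a') = a'"
    proof
      fix a assume "a \<in> {v \<in> permutations_of_set {1..N}. vok N v}"
      then show "psi N (phi N a) = a" using psi_phi by simp
    qed
    show "psi N ` {u \<in> permutations_of_set {0..<N}. okR u} \<subseteq> {v \<in> permutations_of_set {1..N}. vok N v}"
    proof clarify
      fix u assume u: "u \<in> permutations_of_set {0..<N}" "okR u"
      show "psi N u \<in> permutations_of_set {1..N} \<and> vok N (psi N u)"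
        using psi_perm[OF u(1)] vok_psi[OF u(1)] u(2) by simp
    qed
    show "phi N ` {v \<in> permutations_of_set {1..N}. vok N v} \<subseteq> {u \<in> permutations_of_set {0..<N}. okR u}"
    proof clarify
      fix v assume v: "v \<in> permutations_of_set {1..N}" "vok N v"
      have "vok N (psi N (phi N v))" using psi_phi[OF v(1)] v(2) by simp
      then show "phi N v \<in> permutations_of_set {0..<N} \<and> okR (phi N v)"
        using vok_psi[OF phi_perm[OF v(1)]] phi_perm[OF v(1)] by simp
    qed
  qed
  then show ?thesis by (simp add: bij_betw_same_card)
qed


lemma Rr_iff: "(q,x) \<in> Rr \<longleftrightarrow> (x mod 3 = 0 \<and> 3 \<le> x \<and> q = x - 3) \<or> (x mod 3 = 1 \<and> q = x + 2) \<or>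
   (x mod 3 = 2 \<and> q = x - 1) \<or> (x mod 3 = 1 \<and> 4 \<le> x \<and> q = x - 2)"
proof
  assume "(q,x) \<in> Rr"
  then obtain i where "(q = 3*i \<and> x = 3*i+3) \<or> (q = 3*i+3 \<and> x = 3*i+1) \<or> (q = 3*i+1 \<and> x = 3*i+2) \<or> (q = 3*i+2 \<and> x = 3*i+4)"
    by (auto simp: Rr_def)
  then show "(x mod 3 = 0 \<and> 3 \<le> x \<and> q = x - 3) \<or> (x mod 3 = 1 \<and> q = x + 2) \<or>
   (x mod 3 = 2 \<and> q = x - 1) \<or> (x mod 3 = 1 \<and> 4 \<le> x \<and> q = x - 2)"
    by (elim disjE) presburger+
next
  assume h: "(x mod 3 = 0 \<and> 3 \<le> x \<and> q = x - 3) \<or> (x mod 3 = 1 \<and> q = x + 2) \<or>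
   (x mod 3 = 2 \<and> q = x - 1) \<or> (x mod 3 = 1 \<and> 4 \<le> x \<and> q = x - 2)"
  have d: "x = 3*(x div 3) + x mod 3" by simp
  from h have "\<exists>i. (q = 3*i \<and> x = 3*i+3) \<or> (q = 3*i+3 \<and> x = 3*i+1) \<or> (q = 3*i+1 \<and> x = 3*i+2) \<or> (q = 3*i+2 \<and> x = 3*i+4)"
  proof (elim disjE)
    assume "x mod 3 = 0 \<and> 3 \<le> x \<and> q = x - 3"
    then have "q = 3*(x div 3 - 1) \<and> x = 3*(x div 3 - 1)+3" using d by linarith
    then show ?thesis by blast
  next
    assume "x mod 3 = 1 \<and> q = x + 2"
    then have "q = 3*(x div 3)+3 \<and> x = 3*(x div 3)+1" using d by linarith
    then show ?thesis by blast
  next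
    assume "x mod 3 = 2 \<and> q = x - 1"
    then have "q = 3*(x div 3)+1 \<and> x = 3*(x div 3)+2" using d by linarith
    then show ?thesis by blast
  next
    assume "x mod 3 = 1 \<and> 4 \<le> x \<and> q = x - 2"
    then have "q = 3*(x div 3 - 1)+2 \<and> x = 3*(x div 3 - 1)+4" using d by linarith
    then show ?thesis by blast
  qed
  then show "(q,x) \<in> Rr" by (auto simp: Rr_def)
qed

lemma Rr_irrefl: "(x,x) \<notin> Rr" by (auto simp: Rr_def)

lemma okR_Cons:
  assumes "x \<notin> set u"
  shows "okR (x # u) \<longleftrightarrow> okR u \<and> (\<forall>q\<in>set u. (q,x) \<notin> Rr)"
proof
  assume h: "okR (x # u)"
  have "okR u" unfolding okR_def
  proof (intro allI impI)
    fix a b assume "a < length u" "b < length u" "(u!a, u!b) \<in> Rr"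
    then have "Suc a < Suc b" using h unfolding okR_def by (metis length_Cons nth_Cons_Suc Suc_less_eq)
    then show "a < b" by simp
  qed
  moreover have "\<forall>q\<in>set u. (q,x) \<notin> Rr"
  proof
    fix q assume "q \<in> set u"
    then obtain a where a: "a < length u" "u!a = q" by (auto simp: in_set_conv_nth)
    show "(q,x) \<notin> Rr"
    proof
      assume "(q,x) \<in> Rr"
      then have "((x#u)!(Suc a), (x#u)!0) \<in> Rr" using a by simp
      then have "Suc a < 0" using h a unfolding okR_def by (metis length_Cons Suc_less_eq zero_less_Suc)
      then show False by simp
    qed
  qed
  ultimately show "okR u \<and> (\<forall>q\<in>set u. (q,x) \<notin> Rr)" by simp
next
  assume h: "okR u \<and> (\<forall>q\<in>set u. (q,x) \<notin> Rr)"
  show "okR (x # u)" unfolding okR_def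
  proof (intro allI impI)
    fix a b assume ab: "a < length (x#u)" "b < length (x#u)" "((x#u)!a, (x#u)!b) \<in> Rr"
    show "a < b"
    proof (cases b)
      case 0
      then have "((x#u)!a, x) \<in> Rr" using ab by simp
      moreover have "(x#u)!a \<in> set u \<or> (x#u)!a = x" using ab(1) by (cases a) auto
      ultimately show ?thesis using h Rr_irrefl by auto
    next
      case (Suc b')
      show ?thesis
      proof (cases a)
        case 0 then show ?thesis using Suc by simp
      next
        case (Suc a')
        then have "(u!a', u!b') \<in> Rr" "a' < length u" "b' < length u" using ab \<open>b = Suc b'\<close> by auto
        then show ?thesis using h Suc \<open>b = Suc b'\<close> unfolding okR_def by simp
      qed
    qed
  qed
qed

lemma count_rec:
  assumes fin: "finite S" and ne: "S \<noteq> {}"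
  shows "card {u \<in> permutations_of_set S. okR u} =
    (\<Sum>x\<in>{x\<in>S. \<forall>q\<in>S. (q,x) \<notin> Rr}. card {u \<in> permutations_of_set (S - {x}). okR u})"
proof -
  define M where "M = {x\<in>S. \<forall>q\<in>S. (q,x) \<notin> Rr}"
  define P where "P x = {u \<in> permutations_of_set (S - {x}). okR u}" for x
  have eq: "{u \<in> permutations_of_set S. okR u} = (\<Union>x\<in>M. (#) x ` P x)"
  proof (rule set_eqI, rule iffI)
    fix u assume "u \<in> {u \<in> permutations_of_set S. okR u}"
    then obtain x u' where xu: "x \<in> S" "u' \<in> permutations_of_set (S - {x})" "u = x # u'" "okR u"
      using permutations_of_set_nonempty[OF ne] by auto
    have su: "set u' = S - {x}" using xu(2) by (simp add: permutations_of_set_def)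
    then have "x \<notin> set u'" by simp
    then have "okR u'" "\<forall>q\<in>set u'. (q,x) \<notin> Rr" using okR_Cons xu(3,4) by auto
    then have "x \<in> M" using xu(1) su Rr_irrefl by (auto simp: M_def)
    then show "u \<in> (\<Union>x\<in>M. (#) x ` P x)" using xu \<open>okR u'\<close> by (auto simp: P_def)
  next
    fix u assume "u \<in> (\<Union>x\<in>M. (#) x ` P x)"
    then obtain x u' where xu: "x \<in> M" "u' \<in> permutations_of_set (S - {x})" "okR u'" "u = x # u'"
      by (auto simp: P_def)
    have su: "set u' = S - {x}" using xu(2) by (simp add: permutations_of_set_def)
    have "okR u" using okR_Cons[of x u'] su xu by (auto simp: M_def)
    moreover have "u \<in> permutations_of_set S" using xu(1,2,4) permutations_of_set_nonempty[OF ne] by (auto simp: M_def)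
    ultimately show "u \<in> {u \<in> permutations_of_set S. okR u}" by simp
  qed
  have finM: "finite M" using fin by (simp add: M_def)
  have finP: "\<And>x. finite ((#) x ` P x)" by (simp add: P_def)
  have disj: "\<forall>x\<in>M. \<forall>y\<in>M. x \<noteq> y \<longrightarrow> (#) x ` P x \<inter> (#) y ` P y = {}" by auto
  have "card {u \<in> permutations_of_set S. okR u} = (\<Sum>x\<in>M. card ((#) x ` P x))"
    unfolding eq by (rule card_UN_disjoint[OF finM]) (use finP disj in auto)
  also have "\<dots> = (\<Sum>x\<in>M. card (P x))" by (simp add: card_image)
  finally show ?thesis by (simp add: M_def P_def)
qed


lemma m2: "(3*m+2) mod 3 = (2::nat)" by (simp add: mod_Suc)
lemma m1: "(3*m+1) mod 3 = (1::nat)" by simp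
lemma m0: "(3*m) mod 3 = (0::nat)" by simp

lemma three_ne1: "3*i \<noteq> 3*m+(1::nat)"
proof
  assume "3*i = 3*m+(1::nat)" then have "(3*i) mod 3 = (3*m+1) mod 3" by simp
  then show False unfolding m0 m1 by simp
qed
lemma three_ne2: "3*i \<noteq> 3*m+(2::nat)"
proof
  assume "3*i = 3*m+(2::nat)" then have "(3*i) mod 3 = (3*m+2) mod 3" by simp
  then show False unfolding m0 m2 by simp
qed
lemma three_ne12: "3*m+1 \<noteq> 3*m'+(2::nat)"
proof
  assume "3*m+1 = 3*m'+(2::nat)" then have "(3*m+1) mod 3 = (3*m'+2) mod 3" by simp
  then show False unfolding m1 m2 by simp
qed

definition bpos :: "nat \<Rightarrow> nat" where "bpos l = 3*(l div 2) + l mod 2 + 1"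

lemma bpos_even: "bpos (2*m) = 3*m+1" by (simp add: bpos_def)
lemma bpos_odd: "bpos (2*m+1) = 3*m+2" by (simp add: bpos_def)
lemma bpos_odd': "bpos (Suc (2*m)) = 3*m+2" by (simp add: bpos_def)

lemma parity: fixes l :: nat obtains m where "l = 2*m" | m where "l = 2*m+1"
  by (metis even_two_times_div_two odd_two_times_div_two_succ)

lemma bpos_ne3: "bpos l \<noteq> 3*i"
  by (cases l rule: parity) (use three_ne1 three_ne2 bpos_even bpos_odd in metis)+

lemma bpos_ne3': "3*i \<noteq> bpos l" using bpos_ne3 by metis

lemma bpos_inj: "bpos l = bpos l' \<longleftrightarrow> l = l'"
proof
  assume h: "bpos l = bpos l'"
  show "l = l'"
  proof (cases l rule: parity)
    case (1 m)
    show ?thesis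
    proof (cases l' rule: parity)
      case (1 m') then show ?thesis using h \<open>l = 2*m\<close> bpos_even by simp
    next
      case (2 m') then show ?thesis using h \<open>l = 2*m\<close> bpos_even bpos_odd three_ne12 by metis
    qed
  next
    case (2 m)
    show ?thesis
    proof (cases l' rule: parity)
      case (1 m') then show ?thesis using h \<open>l = 2*m+1\<close> bpos_even bpos_odd three_ne12 by metis
    next
      case (2 m') then show ?thesis using h \<open>l = 2*m+1\<close> bpos_odd by simp
    qed
  qed
qed simp

definition Uset :: "nat \<Rightarrow> nat \<Rightarrow> nat \<Rightarrow> nat set" where
  "Uset j a b = (\<lambda>i. 3*i) ` {a..j} \<union> bpos ` {b..2*j}"

lemma mem3: "3*i \<in> Uset j a b \<longleftrightarrow> a \<le> i \<and> i \<le> j"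
  unfolding Uset_def using bpos_ne3 bpos_ne3' by auto

lemma memB: "bpos l \<in> Uset j a b \<longleftrightarrow> b \<le> l \<and> l \<le> 2*j"
  unfolding Uset_def using bpos_ne3 bpos_inj by (auto simp: image_iff)

lemma U_fin: "finite (Uset j a b)"
  by (simp add: Uset_def)

lemma U_remA: "a \<le> j \<Longrightarrow> Uset j a b - {3*a} = Uset j (Suc a) b"
  unfolding Uset_def using bpos_ne3 bpos_ne3' by (auto simp: image_iff)

lemma U_remB: "b \<le> 2*j \<Longrightarrow> Uset j a b - {bpos b} = Uset j a (Suc b)"
  unfolding Uset_def using bpos_ne3 bpos_inj by (auto simp: image_iff)

lemma U_empty: "Uset j (Suc j) (Suc (2*j)) = {}"
  by (simp add: Uset_def)

lemma U_full: "Uset j 0 0 = {0..<3*j+2}"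
proof (rule set_eqI, rule iffI)
  fix x assume "x \<in> Uset j 0 0"
  then consider i where "x = 3*i" "i \<le> j" | l where "x = bpos l" "l \<le> 2*j" by (auto simp: Uset_def)
  then show "x \<in> {0..<3*j+2}"
  proof cases
    case 1 then show ?thesis by simp
  next
    case (2 l)
    then show ?thesis by (cases l rule: parity) (auto simp: bpos_even bpos_odd bpos_odd')
  qed
next
  fix x assume x: "x \<in> {0..<3*j+2}"
  have d: "x = 3*(x div 3) + x mod 3" by simp
  have "x mod 3 < 3" by simp
  then consider "x mod 3 = 0" | "x mod 3 = 1" | "x mod 3 = 2" by linarith
  then show "x \<in> Uset j 0 0"
  proof cases
    case 1
    then have "x = 3*(x div 3)" "x div 3 \<le> j" using d x by auto
    then show ?thesis using mem3 by (metis zero_le)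
  next
    case 2
    then have "x = bpos (2*(x div 3))" "2*(x div 3) \<le> 2*j" using d x by (auto simp: bpos_even)
    then show ?thesis using memB by (metis zero_le)
  next
    case 3
    then have "x = bpos (2*(x div 3)+1)" "2*(x div 3)+1 \<le> 2*j" using d x by (auto simp: bpos_odd')
    then show ?thesis using memB by (metis zero_le)
  qed
qed

lemma predA: "(q, 3*i) \<in> Rr \<longleftrightarrow> 1 \<le> i \<and> q = 3*i - 3"
  unfolding Rr_iff m0 by auto
lemma predB1: "(q, 3*m+1) \<in> Rr \<longleftrightarrow> q = 3*m+3 \<or> (1 \<le> m \<and> q = 3*m - 1)"
  unfolding Rr_iff m1 by auto
lemma predB2: "(q, 3*m+2) \<in> Rr \<longleftrightarrow> q = 3*m+1"
  unfolding Rr_iff m2 by auto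


lemma U_min_iff:
  assumes x: "x \<in> Uset j a b"
  shows "(\<forall>q\<in>Uset j a b. (q,x) \<notin> Rr) \<longleftrightarrow> x = 3*a \<or> (x = bpos b \<and> (odd b \<or> b = 2*j \<or> b + 2 < 2*a))"
proof -
  from x consider i where "x = 3*i" "a \<le> i" "i \<le> j" | l where "x = bpos l" "b \<le> l" "l \<le> 2*j"
    by (auto simp: Uset_def)
  then show ?thesis
  proof cases
    case (1 i)
    have "(\<forall>q\<in>Uset j a b. (q,x) \<notin> Rr) \<longleftrightarrow> \<not> (1 \<le> i \<and> 3*i - 3 \<in> Uset j a b)"
      using 1 predA by auto
    also have "3*i - 3 = 3*(i-1)" by simp
    also have "\<not> (1 \<le> i \<and> 3*(i-1) \<in> Uset j a b) \<longleftrightarrow> i = a" using mem3 1 by auto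
    finally show ?thesis using 1 bpos_ne3 bpos_ne3' by auto
  next
    case (2 l)
    show ?thesis
    proof (cases l rule: parity)
      case (1 m)
      then have xm: "x = 3*m+1" using 2 bpos_even by simp
      have "(\<forall>q\<in>Uset j a b. (q,x) \<notin> Rr) \<longleftrightarrow> 3*m+3 \<notin> Uset j a b \<and> \<not> (1 \<le> m \<and> 3*m - 1 \<in> Uset j a b)"
        using xm predB1 by auto
      note s1 = this
      have e1: "3*m+3 \<in> Uset j a b \<longleftrightarrow> a \<le> m+1 \<and> m+1 \<le> j" using mem3[of "m+1" j a b] by (simp add: algebra_simps)
      have "1 \<le> m \<Longrightarrow> 3*m - 1 = bpos (2*(m-1)+1)" by (cases m) (simp_all add: bpos_odd')
      then have e2: "(1 \<le> m \<and> 3*m - 1 \<in> Uset j a b) \<longleftrightarrow> (1 \<le> m \<and> b \<le> 2*(m-1)+1)"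
        using memB 2 1 by auto
      have e: "(\<forall>q\<in>Uset j a b. (q,x) \<notin> Rr) \<longleftrightarrow> \<not> (a \<le> m+1 \<and> m+1 \<le> j) \<and> \<not> (1 \<le> m \<and> b \<le> 2*(m-1)+1)"
        by (simp only: s1 e1 e2)
      have "x = bpos b \<longleftrightarrow> b = l" using 2 bpos_inj by auto
      moreover have "x \<noteq> 3*a" using 2 bpos_ne3 by simp
      ultimately show ?thesis unfolding e using 1 2 by auto
    next
      case (2 m)
      then have xm: "x = 3*m+2" using \<open>x = bpos l\<close> bpos_odd by simp
      have "(\<forall>q\<in>Uset j a b. (q,x) \<notin> Rr) \<longleftrightarrow> 3*m+1 \<notin> Uset j a b"
        using xm predB2 by auto
      also have "3*m+1 = bpos (2*m)" by (simp add: bpos_even)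
      also have "bpos (2*m) \<in> Uset j a b \<longleftrightarrow> b \<le> 2*m" using memB \<open>l \<le> 2*j\<close> 2 by auto
      finally have e: "(\<forall>q\<in>Uset j a b. (q,x) \<notin> Rr) \<longleftrightarrow> \<not> b \<le> 2*m" .
      have "x = bpos b \<longleftrightarrow> b = l" using \<open>x = bpos l\<close> bpos_inj by auto
      moreover have "x \<noteq> 3*a" using \<open>x = bpos l\<close> bpos_ne3 by simp
      ultimately show ?thesis unfolding e using 2 \<open>b \<le> l\<close> by auto
    qed
  qed
qed

definition cnt :: "nat \<Rightarrow> nat \<Rightarrow> nat \<Rightarrow> nat" where
  "cnt j a b = card {u \<in> permutations_of_set (Uset j a b). okR u}"

lemma cnt_step:
  assumes "a \<le> j \<or> b \<le> 2*j"
  shows "cnt j a b = (if a \<le> j then cnt j (Suc a) b else 0) +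
     (if b \<le> 2*j \<and> (odd b \<or> b = 2*j \<or> b + 2 < 2*a) then cnt j a (Suc b) else 0)"
proof -
  let ?U = "Uset j a b"
  have ne: "?U \<noteq> {}" using assms mem3 memB by blast
  define A where "A = (if a \<le> j then {3*a} else {})"
  define B where "B = (if b \<le> 2*j \<and> (odd b \<or> b = 2*j \<or> b + 2 < 2*a) then {bpos b} else {})"
  have M: "{x \<in> ?U. \<forall>q\<in>?U. (q,x) \<notin> Rr} = A \<union> B"
  proof (rule set_eqI, rule iffI)
    fix x assume "x \<in> {x \<in> ?U. \<forall>q\<in>?U. (q,x) \<notin> Rr}"
    then show "x \<in> A \<union> B" using U_min_iff[of x j a b] mem3 memB by (auto simp: A_def B_def)
  next
    fix x assume h: "x \<in> A \<union> B"
    then have xU: "x \<in> ?U" using mem3 memB by (auto simp: A_def B_def split: if_splits)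
    then show "x \<in> {x \<in> ?U. \<forall>q\<in>?U. (q,x) \<notin> Rr}" using U_min_iff[OF xU] h by (auto simp: A_def B_def split: if_splits)
  qed
  have disj: "A \<inter> B = {}" using bpos_ne3 bpos_ne3' by (auto simp: A_def B_def)
  have "cnt j a b = (\<Sum>x\<in>A \<union> B. card {u \<in> permutations_of_set (?U - {x}). okR u})"
    unfolding cnt_def using count_rec[OF U_fin ne] M by simp
  also have "\<dots> = (\<Sum>x\<in>A. card {u \<in> permutations_of_set (?U - {x}). okR u}) +
      (\<Sum>x\<in>B. card {u \<in> permutations_of_set (?U - {x}). okR u})"
    by (rule sum.union_disjoint[OF _ _ disj]) (simp_all add: A_def B_def)
  also have "(\<Sum>x\<in>A. card {u \<in> permutations_of_set (?U - {x}). okR u}) = (if a \<le> j then cnt j (Suc a) b else 0)"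
    by (cases "a \<le> j") (simp_all add: A_def cnt_def U_remA)
  also have "(\<Sum>x\<in>B. card {u \<in> permutations_of_set (?U - {x}). okR u}) =
     (if b \<le> 2*j \<and> (odd b \<or> b = 2*j \<or> b + 2 < 2*a) then cnt j a (Suc b) else 0)"
  proof (cases "b \<le> 2*j \<and> (odd b \<or> b = 2*j \<or> b + 2 < 2*a)")
    case True
    then have "B = {bpos b}" by (simp add: B_def)
    then show ?thesis using True by (simp add: cnt_def U_remB)
  next
    case False
    then have "B = {}" by (simp add: B_def)
    then show ?thesis by (simp only: sum.empty if_not_P[OF False])
  qed
  finally show ?thesis .
qed

lemma Q_zero: "Q k n \<noteq> 0 \<Longrightarrow> k \<le> n"
  by (induction k n rule: Q.induct) auto

lemma cnt_Q:
  assumes "1 \<le> a" "a \<le> Suc j" "b \<le> Suc (2*j)" "b + 2 \<le> 2*a"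
  shows "cnt j a b = Q (2*a - b - 1) ((Suc j - a) + (Suc (2*j) - b))"
  using assms
proof (induction "(Suc j - a) + (Suc (2*j) - b)" arbitrary: a b)
  case 0
  then show ?case by simp
next
  case (Suc n')
  define K' where "K' = 2*a - b - 2"
  have K: "2*a - b - 1 = Suc K'" using Suc.prems by (simp add: K'_def)
  have ne: "a \<le> j \<or> b \<le> 2*j" using Suc.prems by auto
  have Qs: "Q (2*a - b - 1) (Suc n') = Q (K'+3) n' + Q K' n'" unfolding K by simp
  have Apart: "(if a \<le> j then cnt j (Suc a) b else 0) = Q (K'+3) n'"
  proof (cases "a \<le> j")
    case True
    have "cnt j (Suc a) b = Q (2*Suc a - b - 1) ((Suc j - Suc a) + (Suc (2*j) - b))"
      by (rule Suc.hyps) (use Suc.prems Suc.hyps(2) True in auto)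
    moreover have "2*Suc a - b - 1 = K'+3" using Suc.prems by (simp add: K'_def)
    moreover have "(Suc j - Suc a) + (Suc (2*j) - b) = n'" using Suc.hyps(2) True by simp
    ultimately have "cnt j (Suc a) b = Q (K'+3) n'" by metis
    then show ?thesis using True by simp
  next
    case False
    then have "a = Suc j" using Suc.prems by simp
    then have "K'+3 > n'" using Suc.hyps(2) Suc.prems by (simp add: K'_def)
    then have "Q (K'+3) n' = 0" using Q_zero by (meson not_le)
    then show ?thesis using False by simp
  qed
  have Bpart: "(if b \<le> 2*j \<and> (odd b \<or> b = 2*j \<or> b + 2 < 2*a) then cnt j a (Suc b) else 0) = Q K' n'"
  proof (cases "b \<le> 2*j \<and> (odd b \<or> b = 2*j \<or> b + 2 < 2*a)")
    case True
    show ?thesis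
    proof (cases "K' = 0")
      case False
      have "cnt j a (Suc b) = Q (2*a - Suc b - 1) ((Suc j - a) + (Suc (2*j) - Suc b))"
        by (rule Suc.hyps) (use Suc.prems Suc.hyps(2) True False in \<open>auto simp: K'_def\<close>)
      moreover have "2*a - Suc b - 1 = K'" by (simp add: K'_def)
      moreover have "(Suc j - a) + (Suc (2*j) - Suc b) = n'" using Suc.hyps(2) True by simp
      ultimately have "cnt j a (Suc b) = Q K' n'" by metis
    then show ?thesis using True by simp
    next
      case K0: True
      then have b2a: "b + 2 = 2*a" using Suc.prems by (simp add: K'_def)
      then have "even b" by presburger
      then have bj: "b = 2*j" using True b2a by auto
      then have aj: "a = Suc j" using b2a by simp
      then have "n' = 0" using Suc.hyps(2) bj by simp
      have "{u. u = [] \<and> okR u} = {[]}" by (auto simp: okR_def)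
      then have "cnt j a (Suc b) = 1" using aj bj U_empty by (simp add: cnt_def)
      then show ?thesis using True K0 \<open>n' = 0\<close> by simp
    qed
  next
    case False
    then have b2j: "b \<le> 2*j" using Suc.prems by auto
    with False have nb: "even b" "b \<noteq> 2*j" "\<not> b + 2 < 2*a" by auto
    then have b2a: "b + 2 = 2*a" using Suc.prems by simp
    then have "K' = 0" by (simp add: K'_def)
    moreover have "n' \<noteq> 0" using Suc.hyps(2) b2a b2j nb by auto
    ultimately have "Q K' n' = 0" by (cases n') auto
    then show ?thesis by (subst if_not_P[OF False]) simp
  qed
  show ?case using cnt_step[OF ne] Apart Bpart Qs Suc.hyps(2)[symmetric] by simp
qed


lemma run_vok:
  assumes l: "length v = 3*j+2"
  shows "(\<forall>i<j. occ_at v (3*i)) \<longleftrightarrow> vok (3*j+2) v"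
proof
  assume h: "\<forall>i<j. occ_at v (3*i)"
  show "vok (3*j+2) v" unfolding vok_def
  proof (intro allI impI)
    fix p q assume pq: "(p,q) \<in> Rr" "p < 3*j+2" "q < 3*j+2"
    then obtain i where c: "(p = 3*i \<and> q = 3*i+3) \<or> (p = 3*i+3 \<and> q = 3*i+1) \<or> (p = 3*i+1 \<and> q = 3*i+2) \<or> (p = 3*i+2 \<and> q = 3*i+4)"
      by (auto simp: Rr_def)
    then have "i < j" using pq by auto
    then have o: "occ_at v (3*i)" using h by simp
    from c show "v!p < v!q" using o unfolding occ_at_iff by (auto simp: add.assoc)
  qed
next
  assume h: "vok (3*j+2) v"
  show "\<forall>i<j. occ_at v (3*i)"
  proof (intro allI impI)
    fix i assume i: "i < j"
    have r: "(p,q) \<in> Rr \<Longrightarrow> p < 3*j+2 \<Longrightarrow> q < 3*j+2 \<Longrightarrow> v!p < v!q" for p q using h by (simp add: vok_def)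
    have "(3*i, 3*i+3) \<in> Rr" "(3*i+3, 3*i+1) \<in> Rr" "(3*i+1, 3*i+2) \<in> Rr" "(3*i+2, 3*i+4) \<in> Rr"
      by (auto simp: Rr_def)
    then show "occ_at v (3*i)" unfolding occ_at_iff using r i l by auto
  qed
qed

lemma card_RUN: assumes "1 \<le> j" shows "card (RUN j) = Q 1 (3*j+1)"
proof -
  have "RUN j = {v \<in> permutations_of_set {1..3*j+2}. vok (3*j+2) v}"
    unfolding RUN_def using run_vok perm_len by blast
  then have "card (RUN j) = card {u \<in> permutations_of_set {0..<3*j+2}. okR u}"
    using card_bridge by simp
  also have "\<dots> = cnt j 0 0" by (simp add: cnt_def U_full)
  also have "\<dots> = cnt j 1 0" using cnt_step[of 0 j 0] assms by simp
  also have "\<dots> = Q (2*1 - 0 - 1) ((Suc j - 1) + (Suc (2*j) - 0))" by (rule cnt_Q) (use assms in auto)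
  also have "\<dots> = Q 1 (3*j+1)" by simp
  finally show ?thesis .
qed


lemma s_zero: assumes "m < k" shows "s_num m k = 0"
proof (cases "m < 5")
  case True then show ?thesis using assms by (simp add: s_num_def pat_len5)
next
  case False
  have "{w \<in> permutations_of_set {1..m}. is_cluster k w} = {}"
  proof (rule ccontr)
    assume "{w \<in> permutations_of_set {1..m}. is_cluster k w} \<noteq> {}"
    then obtain w where w: "w \<in> permutations_of_set {1..m}" "is_cluster k w" by blast
    have l: "length w = m" using perm_len[OF w(1)] .
    have "card (occs w) = k" using w(2) by (simp add: is_cluster_def)
    moreover have "occs w \<subseteq> {..<m}" using occs_le l by fastforce
    then have "card (occs w) \<le> m" using card_mono[of "{..<m}"] by fastforce
    ultimately show False using assms by simp
  qed
  then show ?thesis using False by (simp add: s_num_def pat_len5)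
qed

lemma t_ext: assumes "m \<le> N" shows "(\<Sum>k\<le>N. (-1)^k * int (s_num m k)) = t_num m"
  unfolding t_num_def
  by (rule sum.mono_neutral_right) (use assms s_zero in auto)

lemma t_small: "t_num 0 = 0" "t_num 1 = 1" "t_num 2 = 0" "t_num 3 = 0" "t_num 4 = 0"
  by (simp_all add: t_num_def s_num_def pat_len5 numeral_eq_Suc)

lemma shift_sum:
  fixes g :: "nat \<Rightarrow> int"
  assumes "j \<le> n"
  shows "(\<Sum>k\<le>n. if j \<le> k then g k else 0) = (\<Sum>k'\<le>n-j. g (k'+j))"
proof -
  have "(\<Sum>k\<le>n. if j \<le> k then g k else 0) = (\<Sum>k\<in>{k\<in>{..n}. j \<le> k}. g k)"
    using sum.inter_filter[of "{..n}" g "\<lambda>k. j \<le> k"] by simp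
  also have "{k\<in>{..n}. j \<le> k} = (\<lambda>k'. k'+j) ` {..n-j}"
  proof (rule set_eqI, rule iffI)
    fix k assume "k \<in> {k\<in>{..n}. j \<le> k}"
    then have "k = (k - j) + j" "k - j \<in> {..n-j}" by auto
    then show "k \<in> (\<lambda>k'. k'+j) ` {..n-j}" by (rule image_eqI)
  qed (use assms in auto)
  also have "(\<Sum>k\<in>(\<lambda>k'. k'+j) ` {..n-j}. g k) = (\<Sum>k'\<le>n-j. g (k'+j))"
    by (rule sum.reindex_cong[where l = "\<lambda>k'. k'+j"]) (auto simp: inj_on_def)
  finally show ?thesis .
qed

lemma t_rec:
  assumes n5: "5 \<le> n"
  shows "t_num n = (\<Sum>j\<in>{j. 1 \<le> j \<and> 3*j+2 \<le> n}. (-1)^j * int (Q 1 (3*j+1)) * t_num (n - (3*j+1)))"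
proof -
  define J where "J = {j. 1 \<le> j \<and> 3*j+2 \<le> n}"
  have finJ: "finite J" by (rule finite_subset[of _ "{..n}"]) (auto simp: J_def)
  define f where "f j k = (if j \<le> k then (-1)^k * int (card (RUN j) * s_num (n - (3*j+1)) (k - j)) else 0)" for j k
  have "t_num n = (\<Sum>k\<le>n. (-1)^k * int (s_num n k))" by (simp add: t_num_def)
  also have "\<dots> = (\<Sum>k\<le>n. \<Sum>j\<in>J. f j k)"
  proof (rule sum.cong[OF refl])
    fix k assume "k \<in> {..n}"
    have "s_num n k = (\<Sum>j\<in>{j\<in>J. j \<le> k}. card (RUN j) * s_num (n - (3*j+1)) (k - j))"
      using s_rec[OF n5, of k] by (simp add: J_def conj_assoc)
    also have "\<dots> = (\<Sum>j\<in>J. if j \<le> k then card (RUN j) * s_num (n - (3*j+1)) (k - j) else 0)"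
      by (rule sum.inter_filter[OF finJ])
    finally have "int (s_num n k) = (\<Sum>j\<in>J. int (if j \<le> k then card (RUN j) * s_num (n - (3*j+1)) (k - j) else 0))"
      by (simp only: of_nat_sum)
    also have "\<dots> = (\<Sum>j\<in>J. if j \<le> k then int (card (RUN j) * s_num (n - (3*j+1)) (k - j)) else 0)"
      by (rule sum.cong) auto
    finally have "int (s_num n k) = (\<Sum>j\<in>J. if j \<le> k then int (card (RUN j) * s_num (n - (3*j+1)) (k - j)) else 0)" .
    then have "(-1)^k * int (s_num n k) = (\<Sum>j\<in>J. (-1)^k * (if j \<le> k then int (card (RUN j) * s_num (n - (3*j+1)) (k - j)) else 0))"
      by (simp only: sum_distrib_left)
    also have "\<dots> = (\<Sum>j\<in>J. f j k)" by (rule sum.cong) (auto simp: f_def)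
    finally show "(-1)^k * int (s_num n k) = (\<Sum>j\<in>J. f j k)" .
  qed
  also have "\<dots> = (\<Sum>j\<in>J. \<Sum>k\<le>n. f j k)" by (rule sum.swap)
  also have "\<dots> = (\<Sum>j\<in>J. (-1)^j * int (Q 1 (3*j+1)) * t_num (n - (3*j+1)))"
  proof (rule sum.cong[OF refl])
    fix j assume j: "j \<in> J"
    then have jn: "j \<le> n" "1 \<le> j" "n - (3*j+1) \<le> n - j" by (auto simp: J_def)
    have "(\<Sum>k\<le>n. f j k) = (\<Sum>k'\<le>n-j. (-1)^(k'+j) * int (card (RUN j) * s_num (n - (3*j+1)) k'))"
      unfolding f_def by (subst shift_sum[OF jn(1)]) simp
    also have "\<dots> = (-1)^j * int (card (RUN j)) * (\<Sum>k'\<le>n-j. (-1)^k' * int (s_num (n - (3*j+1)) k'))"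
      by (simp add: sum_distrib_left power_add algebra_simps)
    also have "\<dots> = (-1)^j * int (Q 1 (3*j+1)) * t_num (n - (3*j+1))"
      using t_ext[OF jn(3)] card_RUN[OF jn(2)] by simp
    finally show "(\<Sum>k\<le>n. f j k) = (-1)^j * int (Q 1 (3*j+1)) * t_num (n - (3*j+1))" .
  qed
  finally show ?thesis by (simp add: J_def)
qed


definition VV :: "real fps" where
  "VV = Abs_fps (\<lambda>n. if n = 0 then 0 else real_of_int (t_num n))"

lemma G_nth: "fps_nth (FF - fps_X) i = (if i = 1 then 0 else (-1)^(i+1) * real (Q 1 i))"
proof (cases "i = 1")
  case True then show ?thesis using FF_small(2) by simp
next
  case False then show ?thesis by (simp add: FF_nth)
qed

lemma conv:
  assumes n1: "1 \<le> n"
  shows "(\<Sum>i=0..n. fps_nth (FF - fps_X) i * fps_nth VV (n - i)) =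
    (\<Sum>j\<in>{j. 1 \<le> j \<and> 3*j+2 \<le> n}. (-1)^j * real (Q 1 (3*j+1)) * real_of_int (t_num (n - (3*j+1))))"
proof -
  define J where "J = {j. 1 \<le> j \<and> 3*j+2 \<le> n}"
  define f where "f i = fps_nth (FF - fps_X) i * fps_nth VV (n - i)" for i
  define I where "I = (\<lambda>j. 3*j+1) ` J"
  have IS: "I \<subseteq> {0..n}" by (auto simp: I_def J_def)
  have z: "f i = 0" if "i \<in> {0..n} - I" for i
  proof (rule ccontr)
    assume nz: "f i \<noteq> 0"
    then have G: "fps_nth (FF - fps_X) i \<noteq> 0" and V: "fps_nth VV (n - i) \<noteq> 0" by (auto simp: f_def)
    from G have i1: "i \<noteq> 1" and Qn: "Q 1 i \<noteq> 0" unfolding G_nth by (auto split: if_splits)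
    from Qn have im: "i mod 3 = 1" using Q_mod by fastforce
    from V have "n - i \<noteq> 0" by (auto simp: VV_def)
    then have "i < n" by simp
    define j where "j = i div 3"
    have "i = 3*(i div 3) + i mod 3" by simp
    then have ij: "i = 3*j+1" using im by (simp add: j_def)
    then have "1 \<le> j" using i1 by (cases j) auto
    then have "j \<in> J" using \<open>i < n\<close> ij by (simp add: J_def)
    then have "i \<in> I" using ij by (auto simp: I_def)
    then show False using that by simp
  qed
  have "(\<Sum>i=0..n. f i) = (\<Sum>i\<in>I. f i)"
    by (rule sum.mono_neutral_right) (use IS z in auto)
  also have "\<dots> = (\<Sum>j\<in>J. f (3*j+1))" unfolding I_def by (rule sum.reindex_cong[where l = "\<lambda>j. 3*j+1"]) (auto simp: inj_on_def)
  also have "\<dots> = (\<Sum>j\<in>J. (-1)^j * real (Q 1 (3*j+1)) * real_of_int (t_num (n - (3*j+1))))"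
  proof (rule sum.cong[OF refl])
    fix j assume "j \<in> J"
    then have "n - (3*j+1) \<noteq> 0" "3*j+1 \<noteq> 1" by (auto simp: J_def)
    moreover have "(-1::real)^(3*j+1+1) = (-1)^j"
      by (simp add: power_add power_mult)
    ultimately show "f (3*j+1) = (-1)^j * real (Q 1 (3*j+1)) * real_of_int (t_num (n - (3*j+1)))"
      unfolding f_def G_nth by (simp add: VV_def del: Q.simps)
  qed
  finally show ?thesis by (simp add: f_def J_def)
qed

lemma VV_eq: "VV = fps_X + (FF - fps_X) * VV"
proof (rule fps_ext)
  fix n
  show "fps_nth VV n = fps_nth (fps_X + (FF - fps_X) * VV) n"
  proof (cases "n = 0")
    case True then show ?thesis by (simp add: VV_def FF_nth)
  next
    case False
    then have n1: "1 \<le> n" by simp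
    have r: "fps_nth (fps_X + (FF - fps_X) * VV) n = (if n = 1 then 1 else 0) +
      (\<Sum>j\<in>{j. 1 \<le> j \<and> 3*j+2 \<le> n}. (-1)^j * real (Q 1 (3*j+1)) * real_of_int (t_num (n - (3*j+1))))"
      using conv[OF n1] by (simp add: fps_mult_nth fps_X_nth)
    show ?thesis
    proof (cases "5 \<le> n")
      case True
      have "real_of_int (t_num n) = (\<Sum>j\<in>{j. 1 \<le> j \<and> 3*j+2 \<le> n}. (-1)^j * real (Q 1 (3*j+1)) * real_of_int (t_num (n - (3*j+1))))"
        using t_rec[OF True] by simp
      then show ?thesis using r True False by (simp add: VV_def)
    next
      case False
      then have e: "{j. 1 \<le> j \<and> 3*j+2 \<le> n} = {}" by auto
      have r': "fps_nth (fps_X + (FF - fps_X) * VV) n = (if n = 1 then 1 else 0)"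
        using r unfolding e by simp
      have "n = 1 \<or> n = 2 \<or> n = 3 \<or> n = 4" using False n1 by auto
      then show ?thesis using r' t_small by (auto simp: VV_def)
    qed
  qed
qed

lemma T_VV: "cluster_T = 1 + VV"
  by (rule fps_ext) (simp add: cluster_T_def VV_def)

lemma T_mult: "cluster_T * (1 + fps_X - FF) = 1 + 2 * fps_X - FF"
proof -
  have "VV * (1 + fps_X - FF) = fps_X"
  proof -
    have "VV * (1 + fps_X - FF) = VV - (FF - fps_X) * VV" by (simp add: algebra_simps)
    also have "\<dots> = fps_X" using VV_eq by (simp add: algebra_simps)
    finally show ?thesis .
  qed
  then show ?thesis unfolding T_VV by (simp add: algebra_simps)
qed

lemma den_nz: "(1 + fps_X - FF :: real fps) \<noteq> 0"
proof
  assume "1 + fps_X - FF = 0"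
  then have "fps_nth (1 + fps_X - FF) 0 = 0" by simp
  then show False using FF_small(1) by simp
qed

lemma T_div: "cluster_T = (1 + 2 * fps_X - FF) / (1 + fps_X - FF)"
  using fps_divide_times_eq[OF den_nz, of cluster_T] T_mult by simp


lemma cubic_id:
  fixes s x :: "'a::comm_ring_1"
  shows "(-1 + x*(-2 + x*(-6 + x*(-12 + x*(-8))))) + (s+1)*((3 + x*(5 + x*(15 + x*(24 + x*12)))) +
     (s+1)*((-3 + x*(-4 + x*(-12 + x*(-15 + x*(-6))))) + (s+1)*(1 + x*(1 + x*(3 + x*(3 + x))))))
   = s^2 * (s*(1+x) - x) + x * ((s*(1+x) - x)^3) - x * (s^3)"
  by (simp add: algebra_simps power2_eq_square power3_eq_cube)

definition PP :: "int poly poly" where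
  "PP = [:[:-1,-2,-6,-12,-8:], [:3,5,15,24,12:], [:-3,-4,-12,-15,-6:], [:1,1,3,3,1:]:]"

lemma PP_deg: "degree PP = 3"
  by (simp add: PP_def)

lemma t1: "fps_of_poly (map_poly real_of_int [:-1,-2,-6,-12,-8:]) = (-1 + fps_X*(-2 + fps_X*(-6 + fps_X*(-12 + fps_X*(-8)))) :: real fps)"
  by (simp add: fps_of_poly_pCons map_poly_pCons numeral_fps_const neg_numeral_fps_const algebra_simps)
lemma t2: "fps_of_poly (map_poly real_of_int [:3,5,15,24,12:]) = (3 + fps_X*(5 + fps_X*(15 + fps_X*(24 + fps_X*12))) :: real fps)"
  by (simp add: fps_of_poly_pCons map_poly_pCons numeral_fps_const neg_numeral_fps_const algebra_simps)
lemma t3: "fps_of_poly (map_poly real_of_int [:-3,-4,-12,-15,-6:]) = (-3 + fps_X*(-4 + fps_X*(-12 + fps_X*(-15 + fps_X*(-6)))) :: real fps)"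
  by (simp add: fps_of_poly_pCons map_poly_pCons numeral_fps_const neg_numeral_fps_const algebra_simps)
lemma t4: "fps_of_poly (map_poly real_of_int [:1,1,3,3,1:]) = (1 + fps_X*(1 + fps_X*(3 + fps_X*(3 + fps_X))) :: real fps)"
  by (simp add: fps_of_poly_pCons map_poly_pCons numeral_fps_const neg_numeral_fps_const algebra_simps)

lemma PP_root: "poly (map_poly (\<lambda>q. fps_of_poly (map_poly real_of_int q)) PP) cluster_T = 0"
proof -
  define S where "S = cluster_T - 1"
  define x where "x = (fps_X :: real fps)"
  define \<phi> where "\<phi> = (\<lambda>q. fps_of_poly (map_poly real_of_int q) :: real fps)"
  have \<phi>0: "\<phi> 0 = 0" by (simp add: \<phi>_def)
  have k1: "S * (1 + x - FF) = x" using T_mult unfolding S_def x_def by (simp add: algebra_simps)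
  have k2: "FF + x * FF^3 = x" using FF_eq by (simp add: x_def)
  have T: "cluster_T = S + 1" by (simp add: S_def)
  have m: "map_poly \<phi> PP = [:\<phi> [:-1,-2,-6,-12,-8:], \<phi> [:3,5,15,24,12:], \<phi> [:-3,-4,-12,-15,-6:], \<phi> [:1,1,3,3,1:]:]"
    unfolding PP_def by (simp only: map_poly_pCons[of \<phi>, OF \<phi>0] map_poly_0)
  have "poly (map_poly \<phi> PP) cluster_T =
     (-1 + x*(-2 + x*(-6 + x*(-12 + x*(-8))))) + (S+1)*((3 + x*(5 + x*(15 + x*(24 + x*12)))) +
     (S+1)*((-3 + x*(-4 + x*(-12 + x*(-15 + x*(-6))))) + (S+1)*(1 + x*(1 + x*(3 + x*(3 + x))))))"
    unfolding m T by (simp only: poly_pCons poly_0 \<phi>_def t1 t2 t3 t4 x_def mult_zero_right add_0_right)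
  also have "\<dots> = S^2 * (S*(1+x) - x) + x * ((S*(1+x) - x)^3) - x * (S^3)" by (rule cubic_id)
  also have "S*(1+x) - x = S*FF" using k1 by (simp add: algebra_simps)
  also have "S^2 * (S*FF) + x * ((S*FF)^3) - x * (S^3) = S^3 * (FF + x * FF^3 - x)"
    by (simp add: algebra_simps power3_eq_cube power2_eq_square)
  also have "\<dots> = 0" using k2 by simp
  finally show ?thesis by (simp add: \<phi>_def)
qed

theorem theorem3p2:
  shows "(\<exists>F :: real fps.
            fps_nth F 0 = 0 \<and> fps_nth F 1 = 1 \<and> fps_nth F 2 = 0 \<and> fps_nth F 3 = 0 \<and>
            fps_conv_radius F > 0 \<and>
            (\<exists>r>0. \<forall>x::real. 0 < x \<and> x < r \<longrightarrow>
               eval_fps F x = 2 / sqrt (3 * x) * sinh (arsinh (3 * sqrt (3 * x ^ 3) / 2) / 3)) \<and>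
            cluster_T = (1 + 2 * fps_X - F) / (1 + fps_X - F))
       \<and> (\<exists>P :: int poly poly. degree P = 3 \<and>
            poly (map_poly (\<lambda>q. fps_of_poly (map_poly real_of_int q)) P) cluster_T = 0)"
proof (intro conjI exI)
  show "fps_nth FF 0 = 0" "fps_nth FF 1 = 1" "fps_nth FF 2 = 0" "fps_nth FF 3 = 0" by (rule FF_small)+
  show "fps_conv_radius FF > 0"
  proof -
    have "(0::ereal) < ereal (1/4)" by simp
    then show ?thesis using FF_radius by (rule order_less_le_trans)
  qed
  show "(1/4::real) > 0" by simp
  show "\<forall>x::real. 0 < x \<and> x < 1/4 \<longrightarrow>
               eval_fps FF x = 2 / sqrt (3 * x) * sinh (arsinh (3 * sqrt (3 * x ^ 3) / 2) / 3)"
    using FF_eval by blast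
  show "cluster_T = (1 + 2 * fps_X - FF) / (1 + fps_X - FF)" by (rule T_div)
  show "degree PP = 3" by (rule PP_deg)
  show "poly (map_poly (\<lambda>q. fps_of_poly (map_poly real_of_int q)) PP) cluster_T = 0" by (rule PP_root)
qed


end
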